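(* For every integer $n \geq 4$, $$\gamma_{b,2}(C_4 \square C_n) = 4\left\lfloor \frac{n}{6} \right\rfloor + \begin{cases} 0 & \text{if } n \equiv 0 \pmod 6,\\ 2 & \text{if } n \equiv 1 \text{ or } 2 \pmod 6,\\ 3 & \text{if } n \equiv 3 \text{ or } 4 \pmod 6,\\ 4 & \text{if } n \equiv 5 \pmod 6.\end{cases}$$
   Context: For a graph $G$, a $2$-limited broadcast is a function $f: V(G) \to \{0,1,2\}$. A vertex $u$ hears the broadcast from $v$ if $f(v) > 0$ and $d(u,v) \leq f(v)$, where $d$ is the distance in $G$. The broadcast $f$ is dominating if every vertex of $G$ hears the broadcast from some vertex. The cost of $f$ is $\sum_{v \in V(G)} f(v)$. The $2$-limited broadcast domination number $\gamma_{b,2}(G)$ is the minimum cost of a $2$-limited dominating broadcast on $G$. $C_n$ denotes the cycle on $n$ vertices and $\square$ the Cartesian product of graphs. *)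

theory Defs
  imports Main
begin

inductive walk :: "'a set \<Rightarrow> ('a \<Rightarrow> 'a \<Rightarrow> bool) \<Rightarrow> nat \<Rightarrow> 'a \<Rightarrow> 'a \<Rightarrow> bool"
  for V E where
  walk0: "u \<in> V \<Longrightarrow> walk V E 0 u u"
| walkS: "u \<in> V \<Longrightarrow> E u w \<Longrightarrow> walk V E k w v \<Longrightarrow> walk V E (Suc k) u v"

(* graph distance: length of a shortest walk (only meaningful for connected pairs) *)
definition gdist :: "'a set \<Rightarrow> ('a \<Rightarrow> 'a \<Rightarrow> bool) \<Rightarrow> 'a \<Rightarrow> 'a \<Rightarrow> nat" where
  "gdist V E u v = (LEAST k. walk V E k u v)"

definition hears :: "'a set \<Rightarrow> ('a \<Rightarrow> 'a \<Rightarrow> bool) \<Rightarrow> ('a \<Rightarrow> nat) \<Rightarrow> 'a \<Rightarrow> 'a \<Rightarrow> bool" where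
  "hears V E f u v \<longleftrightarrow> f v > 0 \<and> (\<exists>k. walk V E k v u) \<and> gdist V E v u \<le> f v"

definition broadcast2 :: "'a set \<Rightarrow> ('a \<Rightarrow> nat) \<Rightarrow> bool" where
  "broadcast2 V f \<longleftrightarrow> (\<forall>v\<in>V. f v \<le> 2) \<and> (\<forall>v. v \<notin> V \<longrightarrow> f v = 0)"

definition dominating_bcast2 :: "'a set \<Rightarrow> ('a \<Rightarrow> 'a \<Rightarrow> bool) \<Rightarrow> ('a \<Rightarrow> nat) \<Rightarrow> bool" where
  "dominating_bcast2 V E f \<longleftrightarrow> broadcast2 V f \<and> (\<forall>u\<in>V. \<exists>v\<in>V. hears V E f u v)"

definition bcast_cost :: "'a set \<Rightarrow> ('a \<Rightarrow> nat) \<Rightarrow> nat" where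
  "bcast_cost V f = (\<Sum>v\<in>V. f v)"

definition gamma_b2 :: "'a set \<Rightarrow> ('a \<Rightarrow> 'a \<Rightarrow> bool) \<Rightarrow> nat" where
  "gamma_b2 V E = (LEAST c. \<exists>f. dominating_bcast2 V E f \<and> bcast_cost V f = c)"

definition cyc_adj :: "nat \<Rightarrow> nat \<Rightarrow> nat \<Rightarrow> bool" where
  "cyc_adj k x y \<longleftrightarrow> x < k \<and> y < k \<and> ((x + 1) mod k = y \<or> (y + 1) mod k = x)"

definition cart_adj :: "('a \<Rightarrow> 'a \<Rightarrow> bool) \<Rightarrow> ('b \<Rightarrow> 'b \<Rightarrow> bool) \<Rightarrow> 'a \<times> 'b \<Rightarrow> 'a \<times> 'b \<Rightarrow> bool" where
  "cart_adj E1 E2 p q \<longleftrightarrow>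
     (fst p = fst q \<and> E2 (snd p) (snd q)) \<or> (snd p = snd q \<and> E1 (fst p) (fst q))"

definition torus_V :: "nat \<Rightarrow> nat \<Rightarrow> (nat \<times> nat) set" where
  "torus_V m n = {0..<m} \<times> {0..<n}"

definition torus_E :: "nat \<Rightarrow> nat \<Rightarrow> nat \<times> nat \<Rightarrow> nat \<times> nat \<Rightarrow> bool" where
  "torus_E m n = cart_adj (cyc_adj m) (cyc_adj n)"

end

theory Submission
  imports Defs
begin


definition cn :: "int \<Rightarrow> int \<Rightarrow> int" where
  "cn m x = min (x mod m) (m - x mod m)"

definition td :: "nat \<Rightarrow> nat \<times> nat \<Rightarrow> nat \<times> nat \<Rightarrow> int" where
  "td n u v = cn 4 (int (fst v) - int (fst u)) + cn (int n) (int (snd v) - int (snd u))"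

definition sh :: "nat \<Rightarrow> nat \<times> nat \<Rightarrow> int \<times> int \<Rightarrow> nat \<times> nat" where
  "sh n P d = (nat ((int (fst P) + fst d) mod 4), nat ((int (snd P) + snd d) mod int n))"

lemma cn_cong: "x mod m = y mod m \<Longrightarrow> cn m x = cn m y"
  by (simp add: cn_def)

lemma cn_mod[simp]: "cn m (x mod m) = cn m x"
  by (simp add: cn_def)

lemma cn_nonneg: "m > 0 \<Longrightarrow> cn m x \<ge> 0"
  unfolding cn_def using pos_mod_bound[of m x] pos_mod_sign[of m x] by linarith

lemma cn_neg: "m > 0 \<Longrightarrow> cn m (- x) = cn m x"
  by (auto simp add: cn_def zmod_zminus1_eq_if)

lemma cn_le_abs: assumes "m > 0" shows "cn m x \<le> \<bar>x\<bar>"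
proof (cases "x \<ge> 0")
  case True
  then have "x mod m \<le> x" using assms by (simp add: zmod_le_nonneg_dividend)
  then show ?thesis using True by (simp add: cn_def)
next
  case False
  then have "(-x) mod m \<le> -x" using assms by (simp add: zmod_le_nonneg_dividend)
  then have "cn m (-x) \<le> -x" by (simp add: cn_def)
  then show ?thesis using False cn_neg[OF assms, of x] by simp
qed

lemma cn_small: assumes "2 * \<bar>d\<bar> \<le> m" shows "cn m d = \<bar>d\<bar>"
proof (cases "d \<ge> 0")
  case True
  show ?thesis
  proof (cases "d = 0")
    case True then show ?thesis using assms by (simp add: cn_def)
  next
    case False
    with True assms have "d < m" by linarith
    then have "d mod m = d" using True by simp
    then show ?thesis using True assms by (simp add: cn_def)
  qed
next
  case False
  then have "d mod m = d + m" using assms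
    by (smt (verit) mod_add_self2 mod_pos_pos_trivial)
  then show ?thesis using False assms by (simp add: cn_def)
qed

lemma cn_rep: assumes "m > 0" shows "\<exists>y. y mod m = x mod m \<and> \<bar>y\<bar> = cn m x"
proof (cases "x mod m \<le> m - x mod m")
  case True
  then show ?thesis using assms by (intro exI[of _ "x mod m"]) (simp add: cn_def)
next
  case False
  have "(x mod m - m) mod m = x mod m" by (simp add: mod_diff_right_eq[symmetric])
  moreover have "\<bar>x mod m - m\<bar> = m - x mod m" using assms pos_mod_bound[of m x] by linarith
  ultimately show ?thesis using False by (intro exI[of _ "x mod m - m"]) (simp add: cn_def)
qed

lemma cn_tri: assumes "m > 0" shows "cn m (x + y) \<le> cn m x + cn m y"
proof -
  obtain x' where x': "x' mod m = x mod m" "\<bar>x'\<bar> = cn m x" using cn_rep[OF assms] by blast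
  obtain y' where y': "y' mod m = y mod m" "\<bar>y'\<bar> = cn m y" using cn_rep[OF assms] by blast
  have "(x' + y') mod m = (x + y) mod m" using x' y' by (metis mod_add_cong)
  then have "cn m (x + y) = cn m (x' + y')" by (metis cn_cong)
  also have "\<dots> \<le> \<bar>x' + y'\<bar>" using cn_le_abs[OF assms] .
  also have "\<dots> \<le> cn m x + cn m y" using x' y' by linarith
  finally show ?thesis .
qed

lemma sh_in_V: "n > 0 \<Longrightarrow> sh n P d \<in> torus_V 4 n"
  unfolding sh_def torus_V_def by (auto simp: nat_less_iff)

lemma sh_fst: "int (fst (sh n P d)) = (int (fst P) + fst d) mod 4"
  by (simp add: sh_def)
lemma sh_snd: "n > 0 \<Longrightarrow> int (snd (sh n P d)) = (int (snd P) + snd d) mod int n"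
  by (simp add: sh_def)

lemma td_sh: assumes "n > 0"
  shows "td n (sh n P (a,b)) (sh n P (a',b')) = cn 4 (a' - a) + cn (int n) (b' - b)"
proof -
  have 1: "((int (fst P) + a') mod 4 - (int (fst P) + a) mod 4) mod 4 = (a' - a) mod 4"
    by (metis add_diff_cancel_left mod_diff_eq)
  have 2: "((int (snd P) + b') mod int n - (int (snd P) + b) mod int n) mod int n = (b' - b) mod int n"
    by (metis add_diff_cancel_left mod_diff_eq)
  show ?thesis unfolding td_def sh_fst sh_snd[OF assms]
    using cn_cong[OF 1] cn_cong[OF 2] by (simp add: sh_fst sh_snd[OF assms] fst_conv snd_conv)
qed


abbreviation TV where "TV n \<equiv> torus_V 4 n"
abbreviation TE where "TE n \<equiv> torus_E 4 n"

lemma inV: "u \<in> TV n \<longleftrightarrow> fst u < 4 \<and> snd u < n"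
  by (cases u) (auto simp: torus_V_def)

lemma V_sh: assumes "P \<in> TV n" "u \<in> TV n"
  shows "sh n P (int (fst u) - int (fst P), int (snd u) - int (snd P)) = u"
  using assms by (cases u) (simp add: sh_def inV)

lemma sh_self: assumes "P \<in> TV n" shows "sh n P (0,0) = P"
  using V_sh[OF assms assms] by simp

lemma sh_sh: assumes "n > 0" shows "sh n (sh n P (a,b)) (a',b') = sh n P (a+a', b+b')"
  using assms by (simp add: sh_def mod_add_left_eq add.assoc)

lemma mod_cancel_l: "((p::int) + a) mod m = (p + a') mod m \<longleftrightarrow> a mod m = a' mod m"
proof
  assume "(p + a) mod m = (p + a') mod m"
  then have "((p + a) - p) mod m = ((p + a') - p) mod m" by (rule mod_diff_cong) simp
  then show "a mod m = a' mod m" by simp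
next
  assume "a mod m = a' mod m" then show "(p + a) mod m = (p + a') mod m" by (intro mod_add_cong) auto
qed

lemma nat_mod_eq: "(m::int) > 0 \<Longrightarrow> nat (x mod m) = nat (y mod m) \<longleftrightarrow> x mod m = y mod m"
  by (metis nat_eq_iff2 pos_mod_sign)

lemma sh_eq_iff: "n > 0 \<Longrightarrow> sh n P (a,b) = sh n P (a',b') \<longleftrightarrow> a mod 4 = a' mod 4 \<and> b mod int n = b' mod int n"
  unfolding sh_def prod.inject
  by (subst nat_mod_eq, simp)+ (simp add: mod_cancel_l)

lemma td_base: assumes "n > 0" "P \<in> TV n"
  shows "td n P (sh n P (a,b)) = cn 4 a + cn (int n) b"
  using td_sh[OF assms(1), of P 0 0 a b] sh_self[OF assms(2)] by simp

lemma td_sym: assumes "n > 0" shows "td n u v = td n v u"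
  unfolding td_def using cn_neg[of 4] cn_neg[of "int n"] assms
  by (metis minus_diff_eq of_nat_0_less_iff zero_less_numeral)

lemma td_nonneg: "n > 0 \<Longrightarrow> td n u v \<ge> 0"
  unfolding td_def using cn_nonneg[of 4] cn_nonneg[of "int n"] by force

lemma td_tri: assumes "n > 0" shows "td n u w \<le> td n u v + td n v w"
proof -
  have a: "cn 4 (int (fst w) - int (fst u)) \<le> cn 4 (int (fst v) - int (fst u)) + cn 4 (int (fst w) - int (fst v))"
    using cn_tri[of 4 "int (fst v) - int (fst u)" "int (fst w) - int (fst v)"] by simp
  have b: "cn (int n) (int (snd w) - int (snd u)) \<le> cn (int n) (int (snd v) - int (snd u)) + cn (int n) (int (snd w) - int (snd v))"
    using cn_tri[of "int n" "int (snd v) - int (snd u)" "int (snd w) - int (snd v)"] assms by simp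
  show ?thesis using a b unfolding td_def by linarith
qed

lemma td_self: "td n u u = 0"
  by (simp add: td_def cn_def)

lemma walk_in_V: "walk V E k u v \<Longrightarrow> u \<in> V \<and> v \<in> V"
  by (induction rule: walk.induct) auto

lemma walk_append: "walk V E k1 u w \<Longrightarrow> walk V E k2 w v \<Longrightarrow> walk V E (k1 + k2) u v"
  by (induction rule: walk.induct) (auto intro: walk.intros)

lemma cn0: assumes "m > 0" "cn m x = 0" shows "x mod m = 0"
  using assms pos_mod_bound[of m x] pos_mod_sign[of m x] unfolding cn_def by linarith

lemma cn1: assumes "m > 0" "cn m x = 1" shows "x mod m = 1 \<or> x mod m = m - 1"
  using assms pos_mod_bound[of m x] pos_mod_sign[of m x] unfolding cn_def by linarith

lemma adj_of_mod: assumes "x < m" "y < m" "(int y - int x) mod int m = 1 \<or> (int y - int x) mod int m = int m - 1"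
  shows "cyc_adj m x y"
proof -
  have m: "m > 0" using assms by simp
  have xm: "int x mod int m = int x" "int y mod int m = int y" using assms by simp_all
  from assms(3) show ?thesis
  proof
    assume h: "(int y - int x) mod int m = 1"
    have "(int x + 1) mod int m = (int x + (int y - int x)) mod int m"
      using h by (metis mod_add_right_eq)
    then have "(int x + 1) mod int m = int y" using xm by simp
    then have "(x + 1) mod m = y" by (metis of_nat_1 of_nat_add of_nat_eq_iff of_nat_mod)
    then show ?thesis using assms by (simp add: cyc_adj_def)
  next
    assume h: "(int y - int x) mod int m = int m - 1"
    show ?thesis
    proof (cases "m = 1")
      case True then show ?thesis using assms by (simp add: cyc_adj_def)
    next
      case False
    have "(- (int y - int x)) mod int m = 1" using h m False
      unfolding zmod_zminus1_eq_if[of "int y - int x"] by simp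
    then have h2: "(int x - int y) mod int m = 1" by simp
    have "(int y + 1) mod int m = (int y + (int x - int y)) mod int m"
      using h2 by (metis mod_add_right_eq)
    then have "(int y + 1) mod int m = int x" using xm by simp
    then have "(y + 1) mod m = x" by (metis of_nat_1 of_nat_add of_nat_eq_iff of_nat_mod)
    then show ?thesis using assms by (simp add: cyc_adj_def)
    qed
  qed
qed

lemma small_mod0: assumes "-m < (d::int)" "d < m" "d mod m = 0" shows "d = 0"
proof (cases "d \<ge> 0")
  case True then show ?thesis using assms by simp
next
  case False
  then have "(d + m) mod m = d + m" using assms by (intro mod_pos_pos_trivial) auto
  then show ?thesis using assms by simp
qed

lemma td1_adj: assumes "n > 0" "u \<in> TV n" "v \<in> TV n" "td n u v = 1" shows "TE n u v"
proof -
  have c4: "cn 4 (int (fst v) - int (fst u)) \<ge> 0" "cn (int n) (int (snd v) - int (snd u)) \<ge> 0"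
    using cn_nonneg assms(1) by auto
  have uv: "fst u < 4" "snd u < n" "fst v < 4" "snd v < n" using assms inV by auto
  consider "cn 4 (int (fst v) - int (fst u)) = 0" "cn (int n) (int (snd v) - int (snd u)) = 1"
    | "cn 4 (int (fst v) - int (fst u)) = 1" "cn (int n) (int (snd v) - int (snd u)) = 0"
    using assms(4) c4 unfolding td_def by linarith
  then show ?thesis
  proof cases
    case 1
    from cn0[OF _ 1(1)] have h3: "(int (fst v) - int (fst u)) mod 4 = 0" by simp
    have h1: "-4 < int (fst v) - int (fst u)" and h2: "int (fst v) - int (fst u) < 4" using uv by linarith+
    have "int (fst v) - int (fst u) = 0" using small_mod0[OF h1 h2 h3] .
    then have "fst u = fst v" by simp
    moreover have "cyc_adj n (snd u) (snd v)"
      using adj_of_mod[OF uv(2) uv(4)] cn1[OF _ 1(2)] assms(1) by simp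
    ultimately show ?thesis by (simp add: torus_E_def cart_adj_def)
  next
    case 2
    from cn0[OF _ 2(2)] assms(1) have h3: "(int (snd v) - int (snd u)) mod int n = 0" by simp
    have h1: "- int n < int (snd v) - int (snd u)" and h2: "int (snd v) - int (snd u) < int n" using uv by linarith+
    have "int (snd v) - int (snd u) = 0" using small_mod0[OF h1 h2 h3] .
    then have "snd u = snd v" by simp
    moreover have "cyc_adj 4 (fst u) (fst v)"
      using adj_of_mod[OF uv(1) uv(3)] cn1[OF _ 2(1)] by simp
    ultimately show ?thesis by (simp add: torus_E_def cart_adj_def)
  qed
qed

lemma cyc_adj_cn: assumes "cyc_adj m x y" shows "cn (int m) (int y - int x) \<le> 1"
proof -
  have m: "m > 0" and xy: "x < m" "y < m" using assms by (auto simp: cyc_adj_def)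
  from assms consider "(x + 1) mod m = y" | "(y + 1) mod m = x" by (auto simp: cyc_adj_def)
  then show ?thesis
  proof cases
    case 1
    then have "int y = (int x + 1) mod int m" by (metis of_nat_1 of_nat_add of_nat_mod)
    then have "(int y - int x) mod int m = 1 mod int m" by (metis add_diff_cancel_left' mod_diff_left_eq)
    then have "cn (int m) (int y - int x) = cn (int m) 1" by (rule cn_cong)
    also have "\<dots> \<le> 1" using cn_le_abs[of "int m" 1] m by simp
    finally show ?thesis .
  next
    case 2
    then have "int x = (int y + 1) mod int m" by (metis of_nat_1 of_nat_add of_nat_mod)
    then have "(int y - int x) mod int m = (-1) mod int m" by (metis diff_add_cancel diff_diff_eq2 mod_diff_right_eq diff_self diff_0 minus_diff_eq add_diff_cancel_left')
    then have "cn (int m) (int y - int x) = cn (int m) (-1)" by (rule cn_cong)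
    also have "\<dots> \<le> 1" using cn_le_abs[of "int m" "-1"] m by simp
    finally show ?thesis .
  qed
qed

lemma adj_td: assumes "TE n u w" shows "td n u w \<le> 1"
proof -
  from assms consider "fst u = fst w" "cyc_adj n (snd u) (snd w)" | "snd u = snd w" "cyc_adj 4 (fst u) (fst w)"
    by (auto simp: torus_E_def cart_adj_def)
  then show ?thesis
  proof cases
    case 1 then show ?thesis using cyc_adj_cn[OF 1(2)] by (simp add: td_def cn_def)
  next
    case 2 then show ?thesis using cyc_adj_cn[OF 2(2)] by (simp add: td_def cn_def)
  qed
qed

lemma walk_td_le: assumes "walk (TV n) (TE n) k u v" "n > 0" shows "td n u v \<le> int k"
  using assms(1)
proof (induction rule: walk.induct)
  case (walk0 u) then show ?case by (simp add: td_self)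
next
  case (walkS u w k v)
  have "td n u v \<le> td n u w + td n w v" using td_tri[OF assms(2)] .
  then show ?case using adj_td[OF walkS(2)] walkS(4) by simp
qed

lemma cn_zero[simp]: "cn (int m) 0 = 0" "cn 4 0 = 0" by (simp_all add: cn_def)
lemma abs_sgn_le: "\<bar>sgn (x::int)\<bar> \<le> 1" by (simp add: sgn_if)

lemma sgn_cases: "(x::int) \<noteq> 0 \<Longrightarrow> \<bar>x - sgn x\<bar> = \<bar>x\<bar> - 1 \<and> \<bar>sgn x\<bar> = 1"
  by (auto simp: sgn_if)

lemma walk_exists_aux:
  assumes "n > 0"
  shows "\<forall>u v. u \<in> TV n \<longrightarrow> v \<in> TV n \<longrightarrow> td n u v = int K \<longrightarrow> walk (TV n) (TE n) K u v"
proof (induction K)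
  case 0
  show ?case
  proof (intro allI impI)
    fix u v assume uv: "u \<in> TV n" "v \<in> TV n" "td n u v = int 0"
    have nn: "cn 4 (int (fst v) - int (fst u)) \<ge> 0" "cn (int n) (int (snd v) - int (snd u)) \<ge> 0"
      using cn_nonneg assms by auto
    have c: "cn 4 (int (fst v) - int (fst u)) = 0" "cn (int n) (int (snd v) - int (snd u)) = 0"
      using uv(3) nn unfolding td_def by linarith+
    have h3: "(int (fst v) - int (fst u)) mod 4 = 0" using cn0[OF _ c(1)] by simp
    have h1: "-4 < int (fst v) - int (fst u)" and h2: "int (fst v) - int (fst u) < 4" using uv inV by auto
    have "int (fst v) - int (fst u) = 0" using small_mod0[OF h1 h2 h3] .
    moreover have "(int (snd v) - int (snd u)) mod int n = 0" using cn0[OF _ c(2)] assms by simp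
    moreover have "- int n < int (snd v) - int (snd u)" "int (snd v) - int (snd u) < int n" using uv inV by auto
    ultimately have "u = v" using small_mod0[of "int n" "int (snd v) - int (snd u)"] by (auto simp: prod_eq_iff)
    then show "walk (TV n) (TE n) 0 u v" using uv by (simp add: walk0)
  qed
next
  case (Suc K)
  show ?case
  proof (intro allI impI)
    fix u v assume uv: "u \<in> TV n" "v \<in> TV n" "td n u v = int (Suc K)"
    define a where "a = int (fst v) - int (fst u)"
    define b where "b = int (snd v) - int (snd u)"
    have vsh: "v = sh n u (a,b)" using V_sh[OF uv(1) uv(2)] by (simp add: a_def b_def)
    obtain a' where a': "a' mod 4 = a mod 4" "\<bar>a'\<bar> = cn 4 a" using cn_rep[of 4 a] by auto
    obtain b' where b': "b' mod int n = b mod int n" "\<bar>b'\<bar> = cn (int n) b" using cn_rep[of "int n" b] assms by auto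
    have v': "v = sh n u (a',b')" using vsh sh_eq_iff[OF assms] a' b' by simp
    have tdv: "td n u v = \<bar>a'\<bar> + \<bar>b'\<bar>" using td_base[OF assms uv(1), of a' b'] v' a' b'
      cn_cong[OF a'(1)] cn_cong[OF b'(1)] by simp
    obtain w where w: "w \<in> TV n" "td n u w \<le> 1" "td n w v \<le> int K"
    proof (cases "a' = 0")
      case False
      let ?w = "sh n u (sgn a', 0)"
      have "?w \<in> TV n" using sh_in_V assms by blast
      moreover have "td n u ?w \<le> 1" using td_base[OF assms uv(1), of "sgn a'" 0]
        cn_le_abs[of 4 "sgn a'"] abs_sgn_le[of a'] by (cases "a' = 0") auto
      moreover have "td n ?w v \<le> int K"
      proof -
        have "v = sh n ?w (a' - sgn a', b')" using v' sh_sh[OF assms] by simp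
        then have "td n ?w v = cn 4 (a' - sgn a') + cn (int n) b'"
          using td_base[OF assms, of ?w "a' - sgn a'" b'] sh_in_V[OF assms] by simp
        also have "\<dots> \<le> \<bar>a' - sgn a'\<bar> + \<bar>b'\<bar>" using cn_le_abs[of 4] cn_le_abs[of "int n"] assms
          by (smt (verit) of_nat_0_less_iff)
        finally show ?thesis using sgn_cases[OF False] tdv uv(3) by simp
      qed
      ultimately show ?thesis using that by blast
    next
      case True
      then have "b' \<noteq> 0" using tdv uv(3) by simp
      let ?w = "sh n u (0, sgn b')"
      have "?w \<in> TV n" using sh_in_V assms by blast
      moreover have "td n u ?w \<le> 1" using td_base[OF assms uv(1), of 0 "sgn b'"]
        cn_le_abs[of "int n" "sgn b'"] abs_sgn_le[of b'] assms by (cases "b' = 0") auto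
      moreover have "td n ?w v \<le> int K"
      proof -
        have "v = sh n ?w (a', b' - sgn b')" using v' sh_sh[OF assms] by simp
        then have "td n ?w v = cn 4 a' + cn (int n) (b' - sgn b')"
          using td_base[OF assms, of ?w a' "b' - sgn b'"] sh_in_V[OF assms] by simp
        also have "\<dots> \<le> \<bar>a'\<bar> + \<bar>b' - sgn b'\<bar>" using cn_le_abs[of 4] cn_le_abs[of "int n"] assms
          by (smt (verit) of_nat_0_less_iff)
        finally show ?thesis using sgn_cases[OF \<open>b' \<noteq> 0\<close>] tdv uv(3) by simp
      qed
      ultimately show ?thesis using that by blast
    qed
    have "td n u v \<le> td n u w + td n w v" using td_tri[OF assms] .
    then have e: "td n u w = 1" "td n w v = int K" using w uv(3) by auto
    have "TE n u w" using td1_adj[OF assms uv(1) w(1) e(1)] .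
    moreover have "walk (TV n) (TE n) K w v" using Suc.IH w(1) uv(2) e(2) by blast
    ultimately show "walk (TV n) (TE n) (Suc K) u v" using uv(1) walkS by metis
  qed
qed

lemma walk_exists: assumes "n > 0" "u \<in> TV n" "v \<in> TV n" shows "walk (TV n) (TE n) (nat (td n u v)) u v"
proof -
  have "td n u v = int (nat (td n u v))" using td_nonneg[OF assms(1)] by simp
  then show ?thesis using walk_exists_aux[OF assms(1), of "nat (td n u v)", rule_format, OF assms(2,3)] by blast
qed

lemma gdist_td: assumes "n > 0" "u \<in> TV n" "v \<in> TV n" shows "gdist (TV n) (TE n) u v = nat (td n u v)"
  unfolding gdist_def
proof (rule Least_equality)
  show "walk (TV n) (TE n) (nat (td n u v)) u v" using walk_exists assms by blast
next
  fix k assume "walk (TV n) (TE n) k u v"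
  then show "nat (td n u v) \<le> k" using walk_td_le assms by fastforce
qed

lemma hears_iff: assumes "n > 0"
  shows "hears (TV n) (TE n) f u v \<longleftrightarrow> 0 < f v \<and> u \<in> TV n \<and> v \<in> TV n \<and> td n v u \<le> int (f v)"
proof
  assume h: "hears (TV n) (TE n) f u v"
  then obtain k where "walk (TV n) (TE n) k v u" by (auto simp: hears_def)
  from walk_in_V[OF this] have uv: "u \<in> TV n" "v \<in> TV n" by simp_all
  then show "0 < f v \<and> u \<in> TV n \<and> v \<in> TV n \<and> td n v u \<le> int (f v)"
    using h gdist_td[OF assms uv(2) uv(1)] td_nonneg[OF assms, of v u] by (auto simp: hears_def)
next
  assume h: "0 < f v \<and> u \<in> TV n \<and> v \<in> TV n \<and> td n v u \<le> int (f v)"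
  then show "hears (TV n) (TE n) f u v"
    using walk_exists[OF assms, of v u] gdist_td[OF assms, of v u] by (auto simp: hears_def)
qed



definition rep :: "int \<Rightarrow> int \<Rightarrow> int" where
  "rep m x = (if x mod m \<le> m - x mod m then x mod m else x mod m - m)"

lemma rep_props: assumes "m > 0"
  shows "rep m x mod m = x mod m" "\<bar>rep m x\<bar> = cn m x" "- m < 2 * rep m x"
proof -
  define r where "r = x mod m"
  have b: "0 \<le> r" "r < m" using assms by (simp_all add: r_def)
  show "rep m x mod m = x mod m"
    by (simp add: rep_def mod_diff_right_eq[symmetric])
  show "\<bar>rep m x\<bar> = cn m x" unfolding rep_def cn_def r_def[symmetric] using b by auto
  show "- m < 2 * rep m x" unfolding rep_def r_def[symmetric] using b by auto
qed

definition L12 :: "(int \<times> int) list" where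
  "L12 = [(0,0),(0,1),(0,-1),(0,2),(0,-2),(1,0),(-1,0),(1,1),(1,-1),(-1,1),(-1,-1),(2,0)]"
definition L5 :: "(int \<times> int) list" where
  "L5 = [(0,0),(0,1),(0,-1),(1,0),(-1,0)]"

lemma L12_mem: assumes "\<bar>a\<bar> + \<bar>b\<bar> \<le> 2" "-1 \<le> a" shows "(a,b) \<in> set L12"
proof -
  have "a = -1 \<or> a = 0 \<or> a = 1 \<or> a = 2" using assms by arith
  moreover have "b = -2 \<or> b = -1 \<or> b = 0 \<or> b = 1 \<or> b = 2" using assms by arith
  ultimately show ?thesis using assms unfolding L12_def by (elim disjE) simp_all
qed

lemma L5_mem: assumes "\<bar>a\<bar> + \<bar>b\<bar> \<le> 1" shows "(a,b) \<in> set L5"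
proof -
  have "a = -1 \<or> a = 0 \<or> a = 1" using assms by arith
  moreover have "b = -1 \<or> b = 0 \<or> b = 1" using assms by arith
  ultimately show ?thesis using assms unfolding L5_def by (elim disjE) simp_all
qed

lemma near_rep: assumes "n > 0" "t \<in> TV n" "w \<in> TV n"
  obtains a b where "w = sh n t (a,b)" "\<bar>a\<bar> + \<bar>b\<bar> = td n t w" "-1 \<le> a"
proof -
  define a0 where "a0 = int (fst w) - int (fst t)"
  define b0 where "b0 = int (snd w) - int (snd t)"
  have w0: "w = sh n t (a0,b0)" using V_sh[OF assms(2,3)] by (simp add: a0_def b0_def)
  have "w = sh n t (rep 4 a0, rep (int n) b0)"
    using w0 sh_eq_iff[OF assms(1)] rep_props(1)[of 4 a0] rep_props(1)[of "int n" b0] assms(1) by simp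
  moreover have "\<bar>rep 4 a0\<bar> + \<bar>rep (int n) b0\<bar> = td n t w"
    using rep_props(2)[of 4 a0] rep_props(2)[of "int n" b0] assms(1) by (simp add: td_def a0_def b0_def)
  moreover have "-1 \<le> rep 4 a0" using rep_props(3)[of 4 a0] by simp
  ultimately show ?thesis using that by blast
qed

lemma near2: assumes "n > 0" "t \<in> TV n" "w \<in> TV n" "td n t w \<le> 2"
  shows "\<exists>a b. (a,b) \<in> set L12 \<and> w = sh n t (a,b)"
  using near_rep[OF assms(1-3)] L12_mem assms(4) by metis

lemma near1: assumes "n > 0" "t \<in> TV n" "w \<in> TV n" "td n t w \<le> 1"
  shows "\<exists>a b. (a,b) \<in> set L5 \<and> w = sh n t (a,b)"
  using near_rep[OF assms(1-3)] L5_mem assms(4) by metis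

lemma ball2_card: assumes "n > 0" "w \<in> TV n" shows "card {u \<in> TV n. td n w u \<le> 2} \<le> 12"
proof -
  have "{u \<in> TV n. td n w u \<le> 2} \<subseteq> sh n w ` set L12" using near2[OF assms(1,2)] by fastforce
  then have "card {u \<in> TV n. td n w u \<le> 2} \<le> card (sh n w ` set L12)"
    by (intro card_mono) auto
  also have "\<dots> \<le> card (set L12)" by (rule card_image_le) simp
  also have "\<dots> \<le> length L12" by (rule card_length)
  finally show ?thesis by (simp add: L12_def)
qed

lemma ball1_card: assumes "n > 0" "w \<in> TV n" shows "card {u \<in> TV n. td n w u \<le> 1} \<le> 5"
proof -
  have "{u \<in> TV n. td n w u \<le> 1} \<subseteq> sh n w ` set L5" using near1[OF assms(1,2)] by fastforce
  then have "card {u \<in> TV n. td n w u \<le> 1} \<le> card (sh n w ` set L5)"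
    by (intro card_mono) auto
  also have "\<dots> \<le> card (set L5)" by (rule card_image_le) simp
  also have "\<dots> \<le> length L5" by (rule card_length)
  finally show ?thesis by (simp add: L5_def)
qed

definition cov :: "nat \<Rightarrow> (nat \<times> nat \<Rightarrow> nat) \<Rightarrow> nat \<times> nat \<Rightarrow> nat \<times> nat \<Rightarrow> bool" where
  "cov n f w u \<longleftrightarrow> w \<in> TV n \<and> 0 < f w \<and> td n w u \<le> int (f w)"

definition hh :: "nat \<Rightarrow> (nat \<times> nat \<Rightarrow> nat) \<Rightarrow> nat \<times> nat \<Rightarrow> nat" where
  "hh n f u = card {w \<in> TV n. cov n f w u}"

lemma finV[simp]: "finite (TV n)" by (simp add: torus_V_def)
lemma cardV: "card (TV n) = 4 * n" by (simp add: torus_V_def card_cartesian_product)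

lemma card_filter_sum: "finite A \<Longrightarrow> card {x \<in> A. P x} = (\<Sum>x\<in>A. if P x then 1 else 0)"
  by (simp add: sum.inter_filter[symmetric])

definition bnd :: "nat \<Rightarrow> nat" where "bnd x = (if x = 0 then 0 else if x = 1 then 5 else 12)"

lemma double_count: assumes "n > 0" "\<forall>w \<in> TV n. f w \<le> 2"
  shows "(\<Sum>u\<in>TV n. hh n f u) \<le> (\<Sum>w\<in>TV n. bnd (f w))"
proof -
  have "(\<Sum>u\<in>TV n. hh n f u) = (\<Sum>u\<in>TV n. \<Sum>w\<in>TV n. if cov n f w u then 1 else 0)"
    unfolding hh_def by (simp add: card_filter_sum)
  also have "\<dots> = (\<Sum>w\<in>TV n. \<Sum>u\<in>TV n. if cov n f w u then 1 else 0)" by (rule sum.swap)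
  also have "\<dots> = (\<Sum>w\<in>TV n. card {u \<in> TV n. cov n f w u})" by (simp add: card_filter_sum)
  also have "\<dots> \<le> (\<Sum>w\<in>TV n. bnd (f w))"
  proof (rule sum_mono)
    fix w assume w: "w \<in> TV n"
    consider "f w = 0" | "f w = 1" | "f w = 2" using assms(2) w by force
    then show "card {u \<in> TV n. cov n f w u} \<le> bnd (f w)"
    proof cases
      case 1 then show ?thesis by (simp add: cov_def bnd_def)
    next
      case 2
      have "{u \<in> TV n. cov n f w u} = {u \<in> TV n. td n w u \<le> 1}" using 2 w by (auto simp: cov_def)
      then show ?thesis using ball1_card[OF assms(1) w] 2 by (simp add: bnd_def)
    next
      case 3
      have "{u \<in> TV n. cov n f w u} = {u \<in> TV n. td n w u \<le> 2}" using 3 w by (auto simp: cov_def)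
      then show ?thesis using ball2_card[OF assms(1) w] 3 by (simp add: bnd_def)
    qed
  qed
  finally show ?thesis .
qed

lemma sums_ab: assumes "\<forall>w \<in> TV n. f w \<le> 2"
  shows "(\<Sum>w\<in>TV n. bnd (f w)) = 5 * card {w \<in> TV n. f w = 1} + 12 * card {w \<in> TV n. f w = 2}"
    and "(\<Sum>w\<in>TV n. f w) = card {w \<in> TV n. f w = 1} + 2 * card {w \<in> TV n. f w = 2}"
proof -
  have e1: "\<And>w. w \<in> TV n \<Longrightarrow> bnd (f w) = 5 * (if f w = 1 then 1 else 0) + 12 * (if f w = 2 then 1 else 0)"
    using assms by (force simp: bnd_def)
  have e2: "\<And>w. w \<in> TV n \<Longrightarrow> f w = (if f w = 1 then 1 else 0) + 2 * (if f w = 2 then 1 else 0)"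
    using assms by force
  show "(\<Sum>w\<in>TV n. bnd (f w)) = 5 * card {w \<in> TV n. f w = 1} + 12 * card {w \<in> TV n. f w = 2}"
    by (simp add: sum.cong[OF refl e1] sum.distrib card_filter_sum sum_distrib_left)
  show "(\<Sum>w\<in>TV n. f w) = card {w \<in> TV n. f w = 1} + 2 * card {w \<in> TV n. f w = 2}"
    by (simp add: sum.cong[OF refl e2] sum.distrib card_filter_sum sum_distrib_left)
qed



definition multi :: "nat \<Rightarrow> (nat \<times> nat \<Rightarrow> nat) \<Rightarrow> nat \<times> nat \<Rightarrow> bool" where
  "multi n f u \<longleftrightarrow> (\<exists>w1 w2. w1 \<noteq> w2 \<and> cov n f w1 u \<and> cov n f w2 u)"

definition pp :: "nat \<Rightarrow> nat \<times> nat \<Rightarrow> int \<Rightarrow> int \<Rightarrow> int \<Rightarrow> nat \<times> nat" where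
  "pp n v s x y = sh n v (x, s * y)"

lemma L12_cases: assumes "(a,b) \<in> set L12"
  "P 0 0" "P 0 1" "P 0 (-1)" "P 0 2" "P 0 (-2)" "P 1 0" "P (-1) 0" "P 1 1" "P 1 (-1)" "P (-1) 1" "P (-1) (-1)" "P 2 0"
  shows "P a b"
  using assms unfolding L12_def by auto

lemma L12_neg: "(a,b) \<in> set L12 \<Longrightarrow> (a,-b) \<in> set L12"
  unfolding L12_def by auto

lemma mod_ne0: assumes "0 < \<bar>d\<bar>" "\<bar>d\<bar> < (m::int)" shows "d mod m \<noteq> 0"
proof
  assume h3: "d mod m = 0"
  have h1: "- m < d" and h2: "d < m" using assms by linarith+
  have "d = 0" using small_mod0[OF h1 h2 h3] .
  then show False using assms by simp
qed

locale ctx1 =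
  fixes n :: nat and f :: "nat \<times> nat \<Rightarrow> nat" and v :: "nat \<times> nat"
  assumes n7: "n \<ge> 7" and bnd2: "\<forall>w\<in>TV n. f w \<le> 2"
  and dom: "\<forall>u\<in>TV n. \<exists>w. cov n f w u"
  and vV: "v \<in> TV n" and fv: "f v = 1" and uniq1: "\<forall>w\<in>TV n. f w = 1 \<longrightarrow> w = v"
  and F1: "\<And>u1 u2. u1 \<in> TV n \<Longrightarrow> u2 \<in> TV n \<Longrightarrow> u1 \<noteq> u2 \<Longrightarrow> multi n f u1 \<Longrightarrow> multi n f u2 \<Longrightarrow> False"
  and F2: "\<And>u w1 w2 w3. u \<in> TV n \<Longrightarrow> cov n f w1 u \<Longrightarrow> cov n f w2 u \<Longrightarrow> cov n f w3 u \<Longrightarrow>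
            w1 \<noteq> w2 \<Longrightarrow> w1 \<noteq> w3 \<Longrightarrow> w2 \<noteq> w3 \<Longrightarrow> False"
begin

abbreviation p where "p \<equiv> pp n v"

lemma n0: "n > 0" using n7 by simp
lemma n7i: "int n \<ge> 7" using n7 by simp

lemma p_V[simp]: "p s x y \<in> TV n" unfolding pp_def using sh_in_V n0 by blast

lemma td_p[simp]: assumes "s = 1 \<or> s = -1"
  shows "td n (p s x y) (p s x' y') = cn 4 (x' - x) + cn (int n) (y' - y)"
  using assms
proof
  assume "s = 1" then show ?thesis unfolding pp_def using td_sh[OF n0] by simp
next
  assume "s = -1"
  then have "td n (p s x y) (p s x' y') = cn 4 (x' - x) + cn (int n) (- (y' - y))"
    unfolding pp_def using td_sh[OF n0] by simp
  then show ?thesis using cn_neg[of "int n" "y' - y"] n0 by simp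
qed

lemma p00: "p s 0 0 = v" unfolding pp_def using sh_self[OF vV] by simp

lemma cnn[simp]: "\<bar>d\<bar> \<le> 3 \<Longrightarrow> cn (int n) d = \<bar>d\<bar>"
  using cn_small[of d "int n"] n7 by simp

lemma cn4_simps[simp]: "cn 4 0 = 0" "cn 4 1 = 1" "cn 4 (-1) = 1" "cn 4 2 = 2" "cn 4 (-2) = 2"
  "cn 4 3 = 1" "cn 4 (-3) = 1" "cn 4 4 = 0"
  by (simp_all add: cn_def)

lemma p_neq: assumes "s = 1 \<or> s = -1" "x mod 4 \<noteq> x' mod 4 \<or> (0 < \<bar>y - y'\<bar> \<and> \<bar>y - y'\<bar> < int n)"
  shows "p s x y \<noteq> p s x' y'"
proof
  assume h: "p s x y = p s x' y'"
  then have e: "x mod 4 = x' mod 4" "(s * y) mod int n = (s * y') mod int n"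
    unfolding pp_def using sh_eq_iff[OF n0] by auto
  have "(s * y - s * y') mod int n = 0" using e(2) by (simp add: mod_eq_dvd_iff)
  then have "(s * (y - y')) mod int n = 0" by (simp add: right_diff_distrib)
  moreover have "\<bar>s * (y - y')\<bar> = \<bar>y - y'\<bar>" using assms(1) by (auto simp: abs_mult)
  ultimately show False using assms(2) e(1) mod_ne0[of "s * (y - y')" "int n"] by auto
qed

lemma covI: "w \<in> TV n \<Longrightarrow> 0 < f w \<Longrightarrow> td n w u \<le> int (f w) \<Longrightarrow> cov n f w u"
  by (simp add: cov_def)

lemma pair: assumes "w1 \<noteq> w2" "u1 \<noteq> u2" "u1 \<in> TV n" "u2 \<in> TV n"
  "cov n f w1 u1" "cov n f w2 u1" "cov n f w1 u2" "cov n f w2 u2"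
  shows False
  using F1[OF assms(3,4,2)] assms unfolding multi_def by blast

lemma other2: "w \<in> TV n \<Longrightarrow> 0 < f w \<Longrightarrow> w \<noteq> v \<Longrightarrow> f w = 2"
  using bnd2 uniq1 by force

lemma covv: "s = 1 \<or> s = -1 \<Longrightarrow> cn 4 x + cn (int n) y \<le> 1 \<Longrightarrow> cov n f v (p s x y)"
  using td_p[of s 0 0 x y] p00[of s] fv vV by (auto simp: cov_def)

lemma covp: "s = 1 \<or> s = -1 \<Longrightarrow> f (p s a b) = 2 \<Longrightarrow> cn 4 (x - a) + cn (int n) (y - b) \<le> 2 \<Longrightarrow> cov n f (p s a b) (p s x y)"
  using td_p[of s a b x y] by (auto simp: cov_def)

lemma cn4_mod: "cn 4 (x - a) = cn 4 (x - a mod 4)"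
  by (rule cn_cong) (simp add: mod_diff_right_eq)

lemma L1: assumes s: "s = 1 \<or> s = -1" and c: "c = -1 \<or> c = 0 \<or> c = 1" and f2: "f (p s a c) = 2"
  shows False
proof -
  let ?w = "p s a c"
  have wv: "?w \<noteq> v" using f2 fv by auto
  have cc: "cn (int n) (0 - c) \<le> 1" using c by auto
  have cw: "cov n f ?w (p s x 0)" if "cn 4 (x - a mod 4) \<le> 1" for x
    using covp[OF s f2, of x 0] that cc cn4_mod[of x a] by simp
  have cv: "cov n f v (p s x 0)" if "cn 4 x \<le> 1" for x
    using covv[OF s, of x 0] that by simp
  have pn: "p s x 0 \<noteq> p s x' 0" if "x mod 4 \<noteq> x' mod 4" for x x' using p_neq[OF s] that by blast
  have "a mod 4 = 0 \<or> a mod 4 = 1 \<or> a mod 4 = 2 \<or> a mod 4 = 3" by arith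
  then show False
  proof (elim disjE)
    assume h: "a mod 4 = 0"
    show False using pair[OF wv[symmetric] pn[of 0 1]] cw[of 0] cw[of 1] cv[of 0] cv[of 1] h by simp
  next
    assume h: "a mod 4 = 1"
    show False using pair[OF wv[symmetric] pn[of 0 1]] cw[of 0] cw[of 1] cv[of 0] cv[of 1] h by simp
  next
    assume h: "a mod 4 = 2"
    show False using pair[OF wv[symmetric] pn[of 1 3]] cw[of 1] cw[of 3] cv[of 1] cv[of 3] h by simp
  next
    assume h: "a mod 4 = 3"
    show False using pair[OF wv[symmetric] pn[of 3 0]] cw[of 3] cw[of 0] cv[of 3] cv[of 0] h by simp
  qed
qed

lemma near2s: assumes s: "s = 1 \<or> s = -1" and "t \<in> TV n" "w \<in> TV n" "td n t w \<le> 2"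
  shows "\<exists>a b. (a,b) \<in> set L12 \<and> w = sh n t (a, s * b)"
proof -
  obtain a b' where ab: "(a,b') \<in> set L12" "w = sh n t (a,b')" using near2[OF n0 assms(2-4)] by blast
  have "(a, s * b') \<in> set L12" using s ab(1) L12_neg by auto
  moreover have "s * (s * b') = b'" using s by auto
  ultimately show ?thesis using ab(2) by metis
qed

lemma cover_near: assumes s: "s = 1 \<or> s = -1" and c: "cov n f w (p s x0 y0)"
  shows "\<exists>a b. (a,b) \<in> set L12 \<and> w = p s (x0 + a) (y0 + b)"
proof -
  have wV: "w \<in> TV n" and le: "td n w (p s x0 y0) \<le> 2" using c bnd2 unfolding cov_def by force+
  have le2: "td n (p s x0 y0) w \<le> 2" using le td_sym[OF n0] by simp
  obtain a b where ab: "(a,b) \<in> set L12" "w = sh n (p s x0 y0) (a, s * b)"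
    using near2s[OF s p_V wV le2] by blast
  have "w = p s (x0 + a) (y0 + b)" using ab(2) sh_sh[OF n0] unfolding pp_def by (simp add: distrib_left)
  then show ?thesis using ab(1) by blast
qed

lemma L2: assumes s: "s = 1 \<or> s = -1" and a: "a mod 4 = 1 \<or> a mod 4 = 3" and f2: "f (p s a 2) = 2"
  shows False
proof -
  let ?w = "p s a 2"
  have wv: "?w \<noteq> v" using f2 fv by auto
  have "cn 4 a = cn 4 (a mod 4)" by simp
  also have "\<dots> = 1" using a by (elim disjE) (simp_all del: cn_mod)
  finally have ca1: "cn 4 a = 1" .
  have "cn 4 (0 - a) = cn 4 (0 - a mod 4)" by (rule cn4_mod)
  also have "\<dots> = 1" using a by (elim disjE) (simp_all del: cn_mod)
  finally have ca: "cn 4 a = 1" "cn 4 (0 - a) = 1" using ca1 by auto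
  have c1: "cov n f v (p s 0 1)" using covv[OF s, of 0 1] by simp
  have c2: "cov n f ?w (p s 0 1)" using covp[OF s f2, of 0 1] ca by simp
  have c3: "cov n f v (p s a 0)" using covv[OF s, of a 0] ca by simp
  have c4: "cov n f ?w (p s a 0)" using covp[OF s f2, of a 0] by simp
  have ne: "p s 0 1 \<noteq> p s a 0" using p_neq[OF s, of 0 a 1 0] n7 by simp
  show False using pair[OF wv[symmetric] ne p_V p_V c1 c2 c3 c4] .
qed

lemma step3: assumes s: "s = 1 \<or> s = -1" and f23: "f (p s 2 3) = 2" shows False
proof -
  obtain c2 where cv: "cov n f c2 (p s 1 1)" using dom p_V by blast
  have c2V: "c2 \<in> TV n" and fpos: "0 < f c2" using cv by (auto simp: cov_def)
  have "c2 \<noteq> v"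
  proof
    assume "c2 = v"
    then have "td n (p s 0 0) (p s 1 1) \<le> 1" using cv fv p00[of s] by (simp add: cov_def)
    then show False using s by simp
  qed
  then have f2: "f c2 = 2" using other2 c2V fpos by blast
  obtain a b where ab: "(a,b) \<in> set L12" "c2 = p s (1 + a) (1 + b)" using cover_near[OF s cv] by blast
  have "c2 = p s (1 + a) (1 + b) \<longrightarrow> False"
  proof (rule L12_cases[OF ab(1)])
    show "c2 = p s (1 + 0) (1 + 0) \<longrightarrow> False" using L1[OF s, of 1 1] f2 by auto
    show "c2 = p s (1 + 0) (1 + 1) \<longrightarrow> False" using L2[OF s, of 1] f2 by auto
    show "c2 = p s (1 + 0) (1 + -1) \<longrightarrow> False" using L1[OF s, of 0 1] f2 by auto
    show "c2 = p s (1 + 0) (1 + 2) \<longrightarrow> False"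
    proof
      assume e: "c2 = p s (1 + 0) (1 + 2)"
      have f13: "f (p s 1 3) = 2" using e f2 by simp
      show False
        using pair[OF p_neq[OF s, of 2 1 3 3] p_neq[OF s, of 1 2 3 3] p_V p_V
          covp[OF s f23, of 1 3] covp[OF s f13, of 1 3] covp[OF s f23, of 2 3] covp[OF s f13, of 2 3]] s by simp
    qed
    show "c2 = p s (1 + 0) (1 + -2) \<longrightarrow> False" using L1[OF s, of "-1" 1] f2 by auto
    show "c2 = p s (1 + 1) (1 + 0) \<longrightarrow> False" using L1[OF s, of 1 2] f2 by auto
    show "c2 = p s (1 + -1) (1 + 0) \<longrightarrow> False" using L1[OF s, of 1 0] f2 by auto
    show "c2 = p s (1 + 1) (1 + 1) \<longrightarrow> False"
    proof
      assume e: "c2 = p s (1 + 1) (1 + 1)"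
      have f22: "f (p s 2 2) = 2" using e f2 by simp
      show False
        using pair[OF p_neq[OF s, of 2 2 3 2] p_neq[OF s, of 2 2 2 3] p_V p_V
          covp[OF s f23, of 2 2] covp[OF s f22, of 2 2] covp[OF s f23, of 2 3] covp[OF s f22, of 2 3]] s n7 by simp
    qed
    show "c2 = p s (1 + 1) (1 + -1) \<longrightarrow> False" using L1[OF s, of 0 2] f2 by auto
    show "c2 = p s (1 + -1) (1 + 1) \<longrightarrow> False"
    proof
      assume e: "c2 = p s (1 + -1) (1 + 1)"
      have f02: "f (p s 0 2) = 2" using e f2 by simp
      have ne: "v \<noteq> p s 0 2" using f02 fv by auto
      show False
        using pair[OF ne p_neq[OF s, of 0 0 0 1] p_V p_V
          covv[OF s, of 0 0] covp[OF s f02, of 0 0] covv[OF s, of 0 1] covp[OF s f02, of 0 1]] s n7 by simp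
    qed
    show "c2 = p s (1 + -1) (1 + -1) \<longrightarrow> False" using L1[OF s, of 0 0] f2 by auto
    show "c2 = p s (1 + 2) (1 + 0) \<longrightarrow> False" using L1[OF s, of 1 3] f2 by auto
  qed
  then show False using ab(2) by blast
qed

lemma start: assumes s: "s = 1 \<or> s = -1" shows "f (p s 2 2) = 2"
proof -
  obtain c1 where cv: "cov n f c1 (p s 2 1)" using dom p_V by blast
  have c1V: "c1 \<in> TV n" and fpos: "0 < f c1" using cv by (auto simp: cov_def)
  have "c1 \<noteq> v"
  proof
    assume "c1 = v"
    then have "td n (p s 0 0) (p s 2 1) \<le> 1" using cv fv p00[of s] by (simp add: cov_def)
    then show False using s by simp
  qed
  then have f2: "f c1 = 2" using other2 c1V fpos by blast
  obtain a b where ab: "(a,b) \<in> set L12" "c1 = p s (2 + a) (1 + b)" using cover_near[OF s cv] by blast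
  have "c1 = p s (2 + a) (1 + b) \<longrightarrow> f (p s 2 2) = 2"
  proof (rule L12_cases[OF ab(1)])
    show "c1 = p s (2 + 0) (1 + 0) \<longrightarrow> f (p s 2 2) = 2" using L1[OF s, of 1 2] f2 by auto
    show "c1 = p s (2 + 0) (1 + 1) \<longrightarrow> f (p s 2 2) = 2" using f2 by auto
    show "c1 = p s (2 + 0) (1 + -1) \<longrightarrow> f (p s 2 2) = 2" using L1[OF s, of 0 2] f2 by auto
    show "c1 = p s (2 + 0) (1 + 2) \<longrightarrow> f (p s 2 2) = 2" using step3[OF s] f2 by auto
    show "c1 = p s (2 + 0) (1 + -2) \<longrightarrow> f (p s 2 2) = 2" using L1[OF s, of "-1" 2] f2 by auto
    show "c1 = p s (2 + 1) (1 + 0) \<longrightarrow> f (p s 2 2) = 2" using L1[OF s, of 1 3] f2 by auto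
    show "c1 = p s (2 + -1) (1 + 0) \<longrightarrow> f (p s 2 2) = 2" using L1[OF s, of 1 1] f2 by auto
    show "c1 = p s (2 + 1) (1 + 1) \<longrightarrow> f (p s 2 2) = 2" using L2[OF s, of 3] f2 by auto
    show "c1 = p s (2 + 1) (1 + -1) \<longrightarrow> f (p s 2 2) = 2" using L1[OF s, of 0 3] f2 by auto
    show "c1 = p s (2 + -1) (1 + 1) \<longrightarrow> f (p s 2 2) = 2" using L2[OF s, of 1] f2 by auto
    show "c1 = p s (2 + -1) (1 + -1) \<longrightarrow> f (p s 2 2) = 2" using L1[OF s, of 0 1] f2 by auto
    show "c1 = p s (2 + 2) (1 + 0) \<longrightarrow> f (p s 2 2) = 2" using L1[OF s, of 1 4] f2 by auto
  qed
  then show ?thesis using ab(2) by blast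
qed

end



lemma walk_split: "walk V E (k1 + k2) a b \<Longrightarrow> \<exists>u. walk V E k1 a u \<and> walk V E k2 u b"
proof (induction k1 arbitrary: a)
  case 0
  then have wk: "walk V E k2 a b" by simp
  from walk_in_V[OF wk] have "a \<in> V" by simp
  then show ?case using wk by (auto intro: walk0)
next
  case (Suc k1)
  from Suc.prems have "walk V E (Suc (k1 + k2)) a b" by simp
  then obtain w where w: "a \<in> V" "E a w" "walk V E (k1 + k2) w b" by (cases rule: walk.cases) auto
  obtain u where "walk V E k1 w u" "walk V E k2 u b" using Suc.IH[OF w(3)] by blast
  then show ?case using w by (meson walkS)
qed

lemma midpoint: assumes "n > 0" "x \<in> TV n" "y \<in> TV n" "td n x y \<le> int (R1 + R2)"
  shows "\<exists>u\<in>TV n. td n x u \<le> int R1 \<and> td n u y \<le> int R2"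
proof (cases "td n x y \<le> int R1")
  case True
  then show ?thesis using assms td_self[of n y] by (intro bexI[of _ y]) auto
next
  case False
  define K where "K = nat (td n x y)"
  have wk: "walk (TV n) (TE n) K x y" using walk_exists[OF assms(1-3)] K_def by simp
  have "K = R1 + (K - R1)" using False K_def by auto
  then obtain u where u: "walk (TV n) (TE n) R1 x u" "walk (TV n) (TE n) (K - R1) u y"
    using walk_split[of "TV n" "TE n" R1 "K - R1" x y] wk by auto
  have "u \<in> TV n" using walk_in_V[OF u(1)] by simp
  moreover have "td n x u \<le> int R1" using walk_td_le[OF u(1) assms(1)] .
  moreover have "td n u y \<le> int (K - R1)" using walk_td_le[OF u(2) assms(1)] .
  moreover have "int (K - R1) \<le> int R2" using assms(4) False K_def by auto
  ultimately show ?thesis by force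
qed

lemma chain_step: assumes n: "n > 0" and Q: "Q \<in> TV n" and w: "w \<in> TV n"
  and cv: "td n w (sh n Q (2,1)) \<le> 2"
  and disj: "\<not> (\<exists>u\<in>TV n. td n Q u \<le> 2 \<and> td n w u \<le> 2)"
  shows "w = sh n Q (2,3)"
proof -
  have far: "\<not> td n Q w \<le> 4"
  proof
    assume "td n Q w \<le> 4"
    then have "td n Q w \<le> int (2 + 2)" by simp
    from midpoint[OF n Q w this] obtain u where "u \<in> TV n" "td n Q u \<le> int 2" "td n u w \<le> int 2" by blast
    then have "u \<in> TV n" "td n Q u \<le> 2" "td n u w \<le> 2" by simp_all
    then show False using disj td_sym[OF n, of u w] by auto
  qed
  have tV: "sh n Q (2,1) \<in> TV n" using sh_in_V[OF n] .
  obtain a b where ab: "(a,b) \<in> set L12" "w = sh n (sh n Q (2,1)) (a,b)"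
    using near2[OF n tV w] cv td_sym[OF n, of w "sh n Q (2,1)"] by auto
  have wab: "w = sh n Q (2 + a, 1 + b)" using ab(2) sh_sh[OF n] by simp
  have tdw: "td n Q (sh n Q (x,y)) \<le> cn 4 x + \<bar>y\<bar>" for x y
    using td_base[OF n Q, of x y] cn_le_abs[of "int n" y] n by simp
  have c4: "cn 4 0 = 0" "cn 4 1 = 1" "cn 4 2 = 2" "cn 4 3 = 1" "cn 4 4 = 0" by (simp_all add: cn_def)
  have H: "w \<noteq> sh n Q (x,y)" if "cn 4 x + \<bar>y\<bar> \<le> 4" for x y
  proof
    assume "w = sh n Q (x,y)"
    then have "td n Q w \<le> cn 4 x + \<bar>y\<bar>" using tdw[of x y] by simp
    then show False using far that by linarith
  qed
  have "w = sh n Q (2 + a, 1 + b) \<longrightarrow> w = sh n Q (2,3)"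
  proof (rule L12_cases[OF ab(1)])
    show "w = sh n Q (2 + 0, 1 + 2) \<longrightarrow> w = sh n Q (2,3)" by simp
  qed (simp_all add: H c4)
  then show ?thesis using wab by blast
qed



lemma cn_val: assumes "0 \<le> d" "d \<le> m" shows "cn m d = min d (m - d)"
proof (cases "d = m")
  case True then show ?thesis by (simp add: cn_def)
next
  case False then show ?thesis using assms by (simp add: cn_def)
qed

lemma perfect_contra:
  assumes n: "n = 6 * k + 3" and bnd2: "\<forall>w\<in>TV n. f w \<le> 2"
  and dom: "\<forall>u\<in>TV n. \<exists>w. cov n f w u"
  and no1: "\<forall>w\<in>TV n. f w \<noteq> 1"
  and F0: "\<And>u w1 w2. u \<in> TV n \<Longrightarrow> cov n f w1 u \<Longrightarrow> cov n f w2 u \<Longrightarrow> w1 = w2"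
  and w0: "w0 \<in> TV n" "f w0 = 2"
  shows False
proof -
  have n0: "n > 0" using n by simp
  have cn1: "cn (int n) 1 = 1" using cn_small[of 1 "int n"] n by simp
  define c where "c m = sh n w0 (2 * int m, 3 * int m)" for m
  have chain: "f (c m) = 2" for m
  proof (induction m)
    case 0
    then show ?case using sh_self[OF w0(1)] w0 by (simp add: c_def)
  next
    case (Suc m)
    let ?Q = "c m"
    let ?t = "sh n ?Q (2,1)"
    have QV: "?Q \<in> TV n" unfolding c_def using sh_in_V[OF n0] .
    obtain w where cw: "cov n f w ?t" using dom sh_in_V[OF n0] by blast
    have wV: "w \<in> TV n" and fw: "f w = 2" and twt: "td n w ?t \<le> 2"
      using cw bnd2 no1 unfolding cov_def by force+
    have tQt: "td n ?Q ?t = 3" using td_base[OF n0 QV, of 2 1] cn1 by (simp add: cn_def)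
    have disj: "\<not> (\<exists>u\<in>TV n. td n ?Q u \<le> 2 \<and> td n w u \<le> 2)"
    proof
      assume "\<exists>u\<in>TV n. td n ?Q u \<le> 2 \<and> td n w u \<le> 2"
      then obtain u where u: "u \<in> TV n" "td n ?Q u \<le> 2" "td n w u \<le> 2" by blast
      have "cov n f ?Q u" using u Suc.IH QV by (simp add: cov_def)
      moreover have "cov n f w u" using u wV fw by (simp add: cov_def)
      ultimately have "?Q = w" using F0[OF u(1)] by blast
      then show False using tQt twt by simp
    qed
    have "w = sh n ?Q (2,3)" using chain_step[OF n0 QV wV twt disj] .
    also have "\<dots> = c (Suc m)" unfolding c_def using sh_sh[OF n0] by (simp add: algebra_simps)
    finally show ?case using fw by simp
  qed
  have "c (2 * k + 1) = sh n w0 (2, 0)"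
  proof -
    have e: "2 * int (2 * k + 1) = 2 + int k * 4" by simp
    have "(2 * int (2 * k + 1)) mod 4 = 2 mod 4" unfolding e by (rule mod_mult_self1)
    moreover have "(3 * int (2 * k + 1)) mod int n = 0 mod int n"
    proof -
      have "3 * int (2 * k + 1) = int n" using n by simp
      then show ?thesis by simp
    qed
    ultimately show ?thesis unfolding c_def using sh_eq_iff[OF n0] by blast
  qed
  then have f20: "f (sh n w0 (2,0)) = 2" using chain by metis
  have ne: "w0 \<noteq> sh n w0 (2,0)"
  proof
    assume "w0 = sh n w0 (2,0)"
    then have "sh n w0 (0,0) = sh n w0 (2,0)" using sh_self[OF w0(1)] by simp
    then show False using sh_eq_iff[OF n0] by simp
  qed
  have "cov n f w0 w0" using w0 td_self[of n w0] by (simp add: cov_def)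
  moreover have "cov n f (sh n w0 (2,0)) w0"
    using f20 sh_in_V[OF n0] td_sym[OF n0, of "sh n w0 (2,0)" w0] td_base[OF n0 w0(1), of 2 0]
    by (simp add: cov_def cn_def)
  ultimately show False using F0[OF w0(1)] ne by blast
qed

context ctx1
begin

lemma one_contra: assumes nk: "n = 6 * k + 1" shows False
proof -
  have s1: "(1::int) = 1 \<or> (1::int) = -1" by simp
  have sm: "(-1::int) = 1 \<or> (-1::int) = -1" by simp
  have k1: "k \<ge> 1" using nk n7 by simp
  have fCp: "f (p 1 2 2) = 2" using start[OF s1] .
  have "p (-1) 2 2 = p 1 2 (-2)" by (simp add: pp_def)
  then have fCm: "f (p 1 2 (-2)) = 2" using start[OF sm] by simp
  have Cne: "p 1 2 2 \<noteq> p 1 2 (-2)" using p_neq[OF s1, of 2 2 2 "-2"] n7 by simp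
  have cz1: "cov n f (p 1 2 2) (p 1 2 0)" using covp[OF s1 fCp, of 2 0] by simp
  have cz2: "cov n f (p 1 2 (-2)) (p 1 2 0)" using covp[OF s1 fCm, of 2 0] by simp
  have mz: "multi n f (p 1 2 0)" using cz1 cz2 Cne unfolding multi_def by blast
  have cnv: "cn (int n) d = min d (int n - d)" if "0 \<le> d" "d \<le> int n" for d
    using cn_val that by blast
  have cn4nn: "cn 4 x \<ge> 0" for x using cn_nonneg[of 4 x] by simp
  have chain: "int m \<le> 2 * int k - 1 \<longrightarrow> f (p 1 (2 + 2 * int m) (2 + 3 * int m)) = 2" for m
  proof (induction m)
    case 0 then show ?case using fCp by simp
  next
    case (Suc m)
    show ?case
    proof
      assume mk: "int (Suc m) \<le> 2 * int k - 1"
      let ?Q = "p 1 (2 + 2 * int m) (2 + 3 * int m)"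
      let ?t = "p 1 (4 + 2 * int m) (3 + 3 * int m)"
      have fQ: "f ?Q = 2" using Suc.IH mk by simp
      have QV: "?Q \<in> TV n" by simp
      have tsh: "?t = sh n ?Q (2,1)" unfolding pp_def using sh_sh[OF n0] by (simp add: algebra_simps)
      obtain w where cw: "cov n f w ?t" using dom p_V by blast
      have wV: "w \<in> TV n" and fpos: "0 < f w" and twt: "td n w ?t \<le> int (f w)"
        using cw unfolding cov_def by auto
      have "w \<noteq> v"
      proof
        assume "w = v"
        then have "td n (p 1 0 0) ?t \<le> 1" using twt fv p00[of 1] by simp
        then have le: "cn 4 (4 + 2 * int m) + cn (int n) (3 + 3 * int m) \<le> 1" by simp
        have "cn (int n) (3 + 3 * int m) = min (3 + 3 * int m) (int n - (3 + 3 * int m))"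
          using cnv[of "3 + 3 * int m"] mk nk by simp
        then show False using le cn4nn[of "4 + 2 * int m"] mk nk by linarith
      qed
      then have fw: "f w = 2" using other2 wV fpos by blast
      have twt2: "td n w (sh n ?Q (2,1)) \<le> 2" using twt fw tsh by simp
      have tQt: "td n ?Q ?t = 3" by simp
      have disj: "\<not> (\<exists>u\<in>TV n. td n ?Q u \<le> 2 \<and> td n w u \<le> 2)"
      proof
        assume "\<exists>u\<in>TV n. td n ?Q u \<le> 2 \<and> td n w u \<le> 2"
        then obtain u where u: "u \<in> TV n" "td n ?Q u \<le> 2" "td n w u \<le> 2" by blast
        have cQ: "cov n f ?Q u" using u fQ by (simp add: cov_def)
        have cW: "cov n f w u" using u wV fw by (simp add: cov_def)
        have Qw: "?Q \<noteq> w" using tQt twt fw by auto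
        have "multi n f u" using cQ cW Qw unfolding multi_def by blast
        then have uz: "u = p 1 2 0" using F1[OF u(1) p_V _ _ mz] by blast
        have "td n ?Q (p 1 2 0) = cn 4 (2 - (2 + 2 * int m)) + cn (int n) (0 - (2 + 3 * int m))" by simp
        also have "cn (int n) (0 - (2 + 3 * int m)) = cn (int n) (2 + 3 * int m)"
          using cn_neg[of "int n" "2 + 3 * int m"] n0 by simp
        also have "\<dots> = min (2 + 3 * int m) (int n - (2 + 3 * int m))"
          using cnv[of "2 + 3 * int m"] mk nk by simp
        finally have "td n ?Q (p 1 2 0) = cn 4 (2 - (2 + 2 * int m)) + min (2 + 3 * int m) (int n - (2 + 3 * int m))" .
        then have m0: "m = 0" using u(2) uz cn4nn[of "2 - (2 + 2 * int m)"] mk nk by simp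
        then have QC: "?Q = p 1 2 2" by simp
        have cwz: "cov n f w (p 1 2 0)" using cW uz by simp
        have wC: "w \<noteq> p 1 2 2" using Qw QC by simp
        have "w = p 1 2 (-2)"
        proof (rule ccontr)
          assume "w \<noteq> p 1 2 (-2)"
          then show False using F2[OF p_V cwz cz1 cz2] wC Cne by blast
        qed
        then have "td n (p 1 2 (-2)) (p 1 4 3) \<le> 2" using twt fw m0 by simp
        then have "cn 4 2 + cn (int n) 5 \<le> 2" by simp
        moreover have "cn (int n) 5 = min 5 (int n - 5)" using cnv[of 5] n7 by simp
        ultimately show False using n7 by simp
      qed
      have "w = sh n ?Q (2,3)" using chain_step[OF n0 QV wV twt2 disj] .
      also have "\<dots> = p 1 (2 + 2 * int (Suc m)) (2 + 3 * int (Suc m))"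
        unfolding pp_def using sh_sh[OF n0] by (simp add: algebra_simps)
      finally show "f (p 1 (2 + 2 * int (Suc m)) (2 + 3 * int (Suc m))) = 2" using fw by simp
    qed
  qed
  have "f (p 1 (2 + 2 * int (2 * k - 1)) (2 + 3 * int (2 * k - 1))) = 2" using chain[of "2 * k - 1"] k1 by simp
  moreover have "p 1 (2 + 2 * int (2 * k - 1)) (2 + 3 * int (2 * k - 1)) = p (-1) 0 2"
  proof -
    have "(2 + 2 * int (2 * k - 1)) mod 4 = 0 mod 4" using k1 by (simp add: of_nat_diff)
    moreover have "(1 * (2 + 3 * int (2 * k - 1))) mod int n = (-1 * 2) mod int n"
    proof -
      have e: "1 * (2 + 3 * int (2 * k - 1)) = (-1 * 2) + int n" using k1 nk by (simp add: of_nat_diff)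
      have "(1 * (2 + 3 * int (2 * k - 1))) mod int n = ((-1 * 2) + int n) mod int n" by (simp only: e)
      also have "\<dots> = (-1 * 2) mod int n" by (rule mod_add_self2)
      finally show ?thesis .
    qed
    ultimately show ?thesis unfolding pp_def using sh_eq_iff[OF n0] by simp
  qed
  ultimately have fD: "f (p (-1) 0 2) = 2" by simp
  have vD: "v \<noteq> p (-1) 0 2" using fD fv by auto
  have une: "p (-1) 0 0 \<noteq> p (-1) 0 1" using p_neq[OF sm, of 0 0 0 1] n7 by simp
  show False
    using pair[OF vD une p_V p_V covv[OF sm, of 0 0] covp[OF sm fD, of 0 0] covv[OF sm, of 0 1] covp[OF sm fD, of 0 1]]
    p00 by simp
qed

end



definition gval :: "nat \<Rightarrow> nat" where
  "gval n = 4 * (n div 6) +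
           (if n mod 6 = 0 then 0
            else if n mod 6 = 1 \<or> n mod 6 = 2 then 2
            else if n mod 6 = 3 \<or> n mod 6 = 4 then 3
            else 4)"

lemma dom_cov: assumes n0: "n > 0" and D: "dominating_bcast2 (TV n) (TE n) f"
  shows "\<forall>u\<in>TV n. \<exists>w. cov n f w u" "\<forall>w\<in>TV n. f w \<le> 2"
proof -
  show "\<forall>u\<in>TV n. \<exists>w. cov n f w u"
  proof
    fix u assume u: "u \<in> TV n"
    from D u obtain w where "w \<in> TV n" "hears (TV n) (TE n) f u w"
      unfolding dominating_bcast2_def by blast
    then have "cov n f w u" unfolding hears_iff[OF n0] cov_def by blast
    then show "\<exists>w. cov n f w u" ..
  qed
  show "\<forall>w\<in>TV n. f w \<le> 2" using D unfolding dominating_bcast2_def broadcast2_def by blast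
qed

lemma hh_ge: assumes "n > 0" "finite (TV n)" "u \<in> TV n" "w1 \<noteq> w2" "cov n f w1 u" "cov n f w2 u"
  shows "hh n f u \<ge> 2"
proof -
  have "{w1, w2} \<subseteq> {w \<in> TV n. cov n f w u}" using assms by (auto simp: cov_def)
  then have "card {w1, w2} \<le> hh n f u" unfolding hh_def by (intro card_mono) auto
  then show ?thesis using assms(4) by simp
qed

lemma hh_ge3: assumes "u \<in> TV n" "w1 \<noteq> w2" "w1 \<noteq> w3" "w2 \<noteq> w3" "cov n f w1 u" "cov n f w2 u" "cov n f w3 u"
  shows "hh n f u \<ge> 3"
proof -
  have "{w1, w2, w3} \<subseteq> {w \<in> TV n. cov n f w u}" using assms by (auto simp: cov_def)
  then have "card {w1, w2, w3} \<le> hh n f u" unfolding hh_def by (intro card_mono) auto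
  then show ?thesis using assms(2-4) by simp
qed

lemma lower: assumes n4: "n \<ge> 4" and D: "dominating_bcast2 (TV n) (TE n) f"
  shows "gval n \<le> bcast_cost (TV n) f"
proof -
  have n0: "n > 0" using n4 by simp
  have dom: "\<forall>u\<in>TV n. \<exists>w. cov n f w u" and bnd2: "\<forall>w\<in>TV n. f w \<le> 2" using dom_cov[OF n0 D] by auto
  have hh1: "hh n f u \<ge> 1" if "u \<in> TV n" for u
  proof -
    from bspec[OF dom that] obtain w where "cov n f w u" ..
    then have "w \<in> {w \<in> TV n. cov n f w u}" by (simp add: cov_def)
    then have "{w \<in> TV n. cov n f w u} \<noteq> {}" by blast
    then show ?thesis unfolding hh_def by (simp add: card_gt_0_iff Suc_le_eq)
  qed
  define E where "E = (\<Sum>u\<in>TV n. hh n f u - 1)"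
  define a where "a = card {w \<in> TV n. f w = 1}"
  define b where "b = card {w \<in> TV n. f w = 2}"
  have sumhh: "(\<Sum>u\<in>TV n. hh n f u) = E + 4 * n"
  proof -
    have "(\<Sum>u\<in>TV n. hh n f u) = (\<Sum>u\<in>TV n. (hh n f u - 1) + 1)"
    proof (rule sum.cong[OF refl])
      fix x assume "x \<in> TV n"
      then show "hh n f x = hh n f x - 1 + 1" using hh1[of x] by simp
    qed
    also have "\<dots> = E + (\<Sum>u\<in>TV n. 1)" unfolding E_def by (rule sum.distrib)
    also have "\<dots> = E + card (TV n)" by simp
    finally show ?thesis by (simp add: cardV)
  qed
  have main: "E + 4 * n \<le> 5 * a + 12 * b"
    using double_count[OF n0 bnd2] sums_ab(1)[OF bnd2] sumhh a_def b_def by simp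
  have cost: "bcast_cost (TV n) f = a + 2 * b"
    using sums_ab(2)[OF bnd2] a_def b_def by (simp add: bcast_cost_def)
  have Esub: "(\<Sum>u\<in>A. hh n f u - 1) \<le> E" if "A \<subseteq> TV n" for A
    unfolding E_def using that by (intro sum_mono2) auto
  have M2: "E \<ge> 2" if "u1 \<in> TV n" "u2 \<in> TV n" "u1 \<noteq> u2" "multi n f u1" "multi n f u2" for u1 u2
  proof -
    have "hh n f u1 \<ge> 2" "hh n f u2 \<ge> 2" using that hh_ge[OF n0 finV] unfolding multi_def by blast+
    then have "(\<Sum>u\<in>{u1,u2}. hh n f u - 1) \<ge> 2" using that(3) by simp
    then show ?thesis using Esub[of "{u1,u2}"] that by simp
  qed
  have M3: "E \<ge> 2" if "u \<in> TV n" "w1 \<noteq> w2" "w1 \<noteq> w3" "w2 \<noteq> w3" "cov n f w1 u" "cov n f w2 u" "cov n f w3 u" for u w1 w2 w3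
  proof -
    have "hh n f u \<ge> 3" using hh_ge3[OF that] .
    then have "(\<Sum>u\<in>{u}. hh n f u - 1) \<ge> 2" by simp
    then show ?thesis using Esub[of "{u}"] that by simp
  qed
  have M1: "E \<ge> 1" if "u \<in> TV n" "multi n f u" for u
  proof -
    have "hh n f u \<ge> 2" using that hh_ge[OF n0 finV] unfolding multi_def by blast
    then have "(\<Sum>u\<in>{u}. hh n f u - 1) \<ge> 1" by simp
    then show ?thesis using Esub[of "{u}"] that by simp
  qed
  show ?thesis
  proof (rule ccontr)
    assume lt: "\<not> gval n \<le> bcast_cost (TV n) f"
    obtain k s where ks: "n = 6 * k + s" "s < 6" by (metis div_mod_decomp mod_less_divisor zero_less_numeral mult.commute)
    have nd: "n div 6 = k" "n mod 6 = s" using ks by auto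
    have lt2: "a + 2 * b < gval n" using lt cost by simp
    have gv: "gval n = 4 * k + (if s = 0 then 0 else if s = 1 \<or> s = 2 then 2 else if s = 3 \<or> s = 4 then 3 else 4)"
      unfolding gval_def nd by simp
    have "s = 0 \<or> s = 1 \<or> s = 2 \<or> s = 3 \<or> s = 4 \<or> s = 5" using ks(2) by arith
    then have cases: "(s = 3 \<and> a = 0 \<and> E = 0 \<and> a + 2 * b = 4 * k + 2) \<or> (s = 1 \<and> a = 1 \<and> E \<le> 1)"
    proof (elim disjE)
      assume "s = 0" then show ?thesis using lt2 main ks(1) gv by simp
    next
      assume h: "s = 1"
      then have "a + 2 * b < 4 * k + 2" "E + 24 * k + 4 \<le> 5 * a + 12 * b" using lt2 main ks(1) gv by simp_all
      then have i1: "a + 2 * b \<le> 4 * k + 1" and i2: "E + 24 * k + 4 \<le> 5 * a + 12 * b" by simp_all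
      have Ea: "E + a \<le> 2" using i1 i2 by linarith
      have a0: "a \<noteq> 0"
      proof
        assume "a = 0"
        then have "2 * b \<le> 4 * k + 1" using i1 by simp
        then have "b \<le> 2 * k" by arith
        then show False using i2 \<open>a = 0\<close> by linarith
      qed
      have a2: "a \<noteq> 2"
      proof
        assume "a = 2"
        then have "2 * b + 1 \<le> 4 * k" using i1 by simp
        then have "b + 1 \<le> 2 * k" by arith
        then show False using i2 \<open>a = 2\<close> by linarith
      qed
      have "a = 1 \<and> E \<le> 1" using Ea a0 a2 by arith
      then show ?thesis using h by simp
    next
      assume "s = 2" then show ?thesis using lt2 main ks(1) gv by simp
    next
      assume h: "s = 3"
      then have "a + 2 * b < 4 * k + 3" "E + 24 * k + 12 \<le> 5 * a + 12 * b" using lt2 main ks(1) gv by simp_all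
      then have i1: "a + 2 * b \<le> 4 * k + 2" and i2: "E + 24 * k + 12 \<le> 5 * a + 12 * b" by simp_all
      have "E + a \<le> 0" using i1 i2 by linarith
      then have "a = 0" "E = 0" by simp_all
      moreover have "a + 2 * b = 4 * k + 2" using i1 i2 \<open>a = 0\<close> by linarith
      ultimately show ?thesis using h by simp
    next
      assume "s = 4" then show ?thesis using lt2 main ks(1) gv by simp
    next
      assume "s = 5" then show ?thesis using lt2 main ks(1) gv by simp
    qed
    then show False
    proof
      assume h: "s = 3 \<and> a = 0 \<and> E = 0 \<and> a + 2 * b = 4 * k + 2"
      have no1: "\<forall>w\<in>TV n. f w \<noteq> 1" using h a_def by auto
      have F0: "w1 = w2" if "u \<in> TV n" "cov n f w1 u" "cov n f w2 u" for u w1 w2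
      proof (rule ccontr)
        assume "w1 \<noteq> w2"
        then have "multi n f u" using that unfolding multi_def by blast
        then show False using M1[OF that(1)] h by simp
      qed
      have "b > 0" using h by simp
      then have "{w \<in> TV n. f w = 2} \<noteq> {}" unfolding b_def by (metis card.empty less_irrefl)
      then obtain w0 where "w0 \<in> {w \<in> TV n. f w = 2}" by blast
      then have w0: "w0 \<in> TV n" "f w0 = 2" by simp_all
      show False using perfect_contra[of n k f w0] ks h dom bnd2 no1 F0 w0 by blast
    next
      assume h: "s = 1 \<and> a = 1 \<and> E \<le> 1"
      obtain v where v: "{w \<in> TV n. f w = 1} = {v}" using h a_def card_1_singletonE by metis
      have vV: "v \<in> TV n" "f v = 1" using v by auto
      have uniq: "\<forall>w\<in>TV n. f w = 1 \<longrightarrow> w = v" using v by auto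
      have n7: "n \<ge> 7" using ks h n4 by simp
      interpret c1: ctx1 n f v
      proof
        show "n \<ge> 7" by (rule n7)
        show "\<forall>w\<in>TV n. f w \<le> 2" by (rule bnd2)
        show "\<forall>u\<in>TV n. \<exists>w. cov n f w u" by (rule dom)
        show "v \<in> TV n" "f v = 1" using vV by auto
        show "\<forall>w\<in>TV n. f w = 1 \<longrightarrow> w = v" by (rule uniq)
        show False if "u1 \<in> TV n" "u2 \<in> TV n" "u1 \<noteq> u2" "multi n f u1" "multi n f u2" for u1 u2
          using M2[OF that] h by simp
        show False if "u \<in> TV n" "cov n f w1 u" "cov n f w2 u" "cov n f w3 u" "w1 \<noteq> w2" "w1 \<noteq> w3" "w2 \<noteq> w3" for u w1 w2 w3
          using M3[OF that(1,5,6,7,2,3,4)] h by simp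
      qed
      show False using c1.one_contra[of k] ks h by simp
    qed
  qed
qed



definition isC2 :: "nat \<Rightarrow> nat \<Rightarrow> nat \<Rightarrow> bool" where
  "isC2 n r c \<longleftrightarrow>
     (r = 0 \<and> c mod 6 = 0 \<and> c < 6 * (n div 6))
   \<or> (r = 2 \<and> c mod 6 = 3 \<and> c < 6 * (if n mod 6 = 2 then n div 6 - 1 else n div 6))
   \<or> (r = 0 \<and> c = 6 * (n div 6) \<and> n mod 6 \<noteq> 0 \<and> n mod 6 \<noteq> 2)
   \<or> (r = 2 \<and> c = 6 * (n div 6) - 1 \<and> n mod 6 = 2)
   \<or> (r = 2 \<and> c = 6 * (n div 6) + 2 \<and> n mod 6 = 5)"

definition isC1 :: "nat \<Rightarrow> nat \<Rightarrow> nat \<Rightarrow> bool" where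
  "isC1 n r c \<longleftrightarrow>
     (r = 2 \<and> c = 6 * (n div 6) - 4 \<and> n mod 6 = 2)
   \<or> (r = 0 \<and> c = 6 * (n div 6) - 3 \<and> n mod 6 = 2)
   \<or> (r = 2 \<and> c = 6 * (n div 6) + 1 \<and> n mod 6 = 3)
   \<or> (r = 2 \<and> c = 6 * (n div 6) + 2 \<and> n mod 6 = 4)"

definition fc :: "nat \<Rightarrow> nat \<times> nat \<Rightarrow> nat" where
  "fc n v = (if fst v < 4 \<and> snd v < n \<and> isC2 n (fst v) (snd v) then 2
             else if fst v < 4 \<and> snd v < n \<and> isC1 n (fst v) (snd v) then 1 else 0)"

lemma fc2: "r < 4 \<Longrightarrow> c < n \<Longrightarrow> isC2 n r c \<Longrightarrow> fc n (r,c) = 2"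
  by (simp add: fc_def)
lemma fc1: "r < 4 \<Longrightarrow> c < n \<Longrightarrow> \<not> isC2 n r c \<Longrightarrow> isC1 n r c \<Longrightarrow> fc n (r,c) = 1"
  by (simp add: fc_def)

lemma cov_rc: assumes n: "n > 0" and w: "rw < 4" "cw < n" and fw: "f (rw,cw) = R" "0 < R"
  and d: "(int c - int cw) mod int n = d mod int n" and le: "cn 4 (int r - int rw) + \<bar>d\<bar> \<le> int R"
  shows "\<exists>w. cov n f w (r,c)"
proof -
  have "cn (int n) (int c - int cw) = cn (int n) d" using cn_cong[OF d] .
  also have "\<dots> \<le> \<bar>d\<bar>" using cn_le_abs n by simp
  finally have "td n (rw,cw) (r,c) \<le> int R" using le by (simp add: td_def)
  then have "cov n f (rw,cw) (r,c)" using w fw by (simp add: cov_def inV)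
  then show ?thesis ..
qed

lemma rows4: "(r::nat) < 4 \<Longrightarrow> P 0 \<Longrightarrow> P 1 \<Longrightarrow> P 2 \<Longrightarrow> P 3 \<Longrightarrow> P r"
  by (cases r; cases "r - 1"; cases "r - 2"; auto simp: numeral_eq_Suc)

lemma cn4v[simp]: "cn 4 0 = 0" "cn 4 1 = 1" "cn 4 2 = 2" "cn 4 3 = 1" "cn 4 (-1) = 1" "cn 4 (-2) = 2"
  by (simp_all add: cn_def)

lemma std_col: assumes n: "n > 0" and f0: "f (0, a) = 2" and f3: "f (2, a + 3) = 2" and fb: "f (0, b) = 2"
  and an: "a + 5 < n" and bn: "b < n" and ab: "(int a + 6 - int b) mod int n = 0"
  and j: "j < 6" and r: "r < 4"
  shows "\<exists>w. cov n f w (r, a + j)"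
proof -
  have A: "(int (a + j) - int a) mod int n = int j mod int n" by simp
  have A3: "(int (a + j) - int (a + 3)) mod int n = (int j - 3) mod int n" by simp
  have B: "(int (a + j) - int b) mod int n = (int j - 6) mod int n"
  proof -
    have "int (a + j) - int b = (int j - 6) + (int a + 6 - int b)" by simp
    then show ?thesis using ab by (metis add.right_neutral mod_add_right_eq)
  qed
  have a0: "a < n" "a + 3 < n" using an by auto
  have r04: "(0::nat) < 4" "(2::nat) < 4" "(0::nat) < 2" by simp_all
  note c0 = cov_rc[where f=f and rw=0 and cw=a and R=2, OF n r04(1) a0(1) f0 r04(3)]
  note c3 = cov_rc[where f=f and rw=2 and cw="a+3" and R=2, OF n r04(2) a0(2) f3 r04(3)]
  note cb = cov_rc[where f=f and rw=0 and cw=b and R=2, OF n r04(1) bn fb r04(3)]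
  have "j = 0 \<or> j = 1 \<or> j = 2 \<or> j = 3 \<or> j = 4 \<or> j = 5" using j by arith
  then show ?thesis
  proof (elim disjE)
    assume jj: "j = 0"
    show ?thesis using r by (rule rows4) (use c0[of "a+j" 0] A jj in simp)+
  next
    assume jj: "j = 1"
    show ?thesis using r by (rule rows4) (use c0[of "a+j" 1] c3[of "a+j" "-2"] A A3 jj in simp)+
  next
    assume jj: "j = 2"
    show ?thesis using r by (rule rows4) (use c0[of "a+j" 2] c3[of "a+j" "-1"] A A3 jj in simp)+
  next
    assume jj: "j = 3"
    show ?thesis using r by (rule rows4) (use c3[of "a+j" 0] A3 jj in simp)+
  next
    assume jj: "j = 4"
    show ?thesis using r by (rule rows4) (use cb[of "a+j" "-2"] c3[of "a+j" 1] A3 B jj in simp)+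
  next
    assume jj: "j = 5"
    show ?thesis using r by (rule rows4) (use cb[of "a+j" "-1"] c3[of "a+j" 2] A3 B jj in simp)+
  qed
qed

lemma cn4_le2: "cn 4 x \<le> 2" unfolding cn_def by linarith

lemma R0: "(r::nat) < 4 \<Longrightarrow> r \<noteq> 2 \<Longrightarrow> cn 4 (int r - int 0) \<le> 1"
  by (rule rows4[of r "\<lambda>r. r \<noteq> 2 \<longrightarrow> cn 4 (int r - int 0) \<le> 1", rule_format]) (simp_all add: cn_def)
lemma R2: "(r::nat) < 4 \<Longrightarrow> r \<noteq> 0 \<Longrightarrow> cn 4 (int r - int 2) \<le> 1"
  by (rule rows4[of r "\<lambda>r. r \<noteq> 0 \<longrightarrow> cn 4 (int r - int 2) \<le> 1", rule_format]) (simp_all add: cn_def)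

lemma wrapmod: "x = d + int n \<Longrightarrow> x mod int n = d mod int n" by simp

lemma fc_dom: assumes n4: "n \<ge> 4" and u: "u \<in> TV n" shows "\<exists>w. cov n (fc n) w u"
proof -
  have n: "n > 0" using n4 by simp
  obtain r c where rc: "u = (r,c)" "r < 4" "c < n" using u by (cases u) (auto simp: inV)
  define k where "k = n div 6"
  define s where "s = n mod 6"
  have nks: "n = 6 * k + s" "s < 6" by (simp_all add: k_def s_def)
  have nd: "n div 6 = k" "n mod 6 = s" by (simp_all add: k_def s_def)
  have r04: "(0::nat) < 4" "(2::nat) < 4" "(0::nat) < 2" "(0::nat) < 1" by simp_all
  have F0: "fc n (0, 6 * q) = 2" if "q < k" for q
    using that nks by (intro fc2) (auto simp: isC2_def nd)
  have F3: "fc n (2, 6 * q + 3) = 2" if "q < k" "s \<noteq> 2 \<or> q + 1 < k" for q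
  proof (rule fc2)
    show "6 * q + 3 < n" using that nks by linarith
    show "isC2 n 2 (6 * q + 3)" unfolding isC2_def nd using that by auto
  qed simp
  have FN: "fc n (0, 6 * k) = 2" if "s \<noteq> 0" "s \<noteq> 2" using that nks by (intro fc2) (auto simp: isC2_def nd)
  have FZ: "fc n (0, 0) = 2"
  proof (cases "k = 0")
    case True
    then have "s \<noteq> 0" "s \<noteq> 2" using nks n4 by auto
    then show ?thesis using FN True by simp
  next
    case False then show ?thesis using F0[of 0] by simp
  qed
  have cen: "\<exists>w. cov n (fc n) w (r, c')"
    if "fc n (rw, cw) = R" "0 < R" "rw < 4" "cw < n" "(int c' - int cw) mod int n = d mod int n"
       "cn 4 (int r - int rw) + \<bar>d\<bar> \<le> int R" for rw cw R c' d
    using cov_rc[where f="fc n", OF n that(3,4,1,2,5,6)] .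
  have main: "\<exists>w. cov n (fc n) w (r, c)"
  proof (cases "c < 6 * k \<and> (s \<noteq> 2 \<or> c div 6 + 1 < k)")
    case True
    define q where "q = c div 6"
    have cq: "c = 6 * q + c mod 6" by (simp add: q_def)
    have qk: "q < k" using True q_def by auto
    define b where "b = (if s = 0 \<and> q + 1 = k then 0 else 6 * q + 6)"
    have fb: "fc n (0, b) = 2"
    proof (cases "q + 1 < k")
      case True then show ?thesis using F0[of "q+1"] by (simp add: b_def add.commute)
    next
      case False
      then have "q + 1 = k" using qk by simp
      then show ?thesis using FN FZ True q_def by (cases "s = 0") (auto simp: b_def add.commute)
    qed
    have bn: "b < n" using qk nks by (auto simp: b_def)
    have ab: "(int (6 * q) + 6 - int b) mod int n = 0"
    proof (cases "s = 0 \<and> q + 1 = k")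
      case True then have "int (6 * q) + 6 - int b = int n" using nks by (simp add: b_def)
      then show ?thesis by simp
    next
      case False
      then have "b = 6 * q + 6" by (simp add: b_def)
      then show ?thesis by simp
    qed
    have "\<exists>w. cov n (fc n) w (r, 6 * q + c mod 6)"
      using std_col[OF n F0[OF qk] _ fb _ bn ab, of "c mod 6" r] F3[OF qk] True q_def qk nks rc(2)
      by (simp add: add.commute)
    then show ?thesis using cq by simp
  next
    case False

    have W: "\<exists>w. cov n (fc n) w (r, c)"
      if "fc n (rw, cw) = R" "0 < R" "rw < 4" "cw < n" "int c - int cw = d \<or> int c - int cw = d + int n"
         "cn 4 (int r - int rw) + \<bar>d\<bar> \<le> int R" for rw cw R d
    proof -
      have "(int c - int cw) mod int n = d mod int n" using that(5) by auto
      then show ?thesis using cen[OF that(1-4) _ that(6)] by simp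
    qed
    note RR = cn4_le2[of "int r - int 0"] cn4_le2[of "int r - int 2"]
    note Q0 = R0[OF rc(2)] and Q2 = R2[OF rc(2)]
    have "s = 0 \<or> s = 1 \<or> s = 2 \<or> s = 3 \<or> s = 4 \<or> s = 5" using nks by arith
    then show ?thesis
    proof (elim disjE)
      assume s0: "s = 0"
      then show ?thesis using False rc nks by auto
    next
      assume s1: "s = 1"
      then have "c = 6 * k" using False rc nks by auto
      then show ?thesis using cen[of 0 "6*k" 2 c 0] FN s1 nks cn4_le2[of "int r"] by simp
    next
      assume s2: "s = 2"
      have k1: "k \<ge> 1" using s2 nks n4 by simp
      define K where "K = k - 1"
      have kK: "k = K + 1" using k1 K_def by simp
      have nK: "n = 6 * K + 8" using nks s2 kK by simp
      have cdm: "c = 6 * (c div 6) + c mod 6" by simp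
      have "c \<ge> 6 * K"
      proof (cases "c < 6 * k")
        case True
        then have "c div 6 + 1 \<ge> k" using False s2 by simp
        then show ?thesis using cdm kK by linarith
      next
        case False then show ?thesis using kK by simp
      qed
      then obtain i where ci: "c = 6 * K + i" using le_Suc_ex by blast
      have i8: "i < 8" using ci rc(3) nK by simp
      have G0: "fc n (0, 6 * K) = 2" using F0[of K] kK by simp
      have G1: "fc n (2, 6 * K + 2) = 1" using nK by (intro fc1) (auto simp: isC2_def isC1_def nd kK)
      have G2: "fc n (0, 6 * K + 3) = 1" using nK by (intro fc1) (auto simp: isC2_def isC1_def nd kK)
      have G3: "fc n (2, 6 * K + 5) = 2" using nK by (intro fc2) (auto simp: isC2_def nd kK s2)
      have "i = 0 \<or> i = 1 \<or> i = 2 \<or> i = 3 \<or> i = 4 \<or> i = 5 \<or> i = 6 \<or> i = 7" using i8 by arith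
      then show ?thesis
      proof (elim disjE)
        assume "i = 0" then show ?thesis using W[OF G0, of 0] RR ci nK by simp
      next
        assume i: "i = 1" show ?thesis
        proof (cases "r = 2")
          case True then show ?thesis using W[OF G1, of "-1"] ci i nK by simp
        next
          case False then show ?thesis using W[OF G0, of 1] Q0 ci i nK by simp
        qed
      next
        assume i: "i = 2" show ?thesis
        proof (cases "r = 0")
          case True then show ?thesis using W[OF G0, of 2] ci i nK by simp
        next
          case False then show ?thesis using W[OF G1, of 0] Q2 ci i nK by simp
        qed
      next
        assume i: "i = 3" show ?thesis
        proof (cases "r = 2")
          case True then show ?thesis using W[OF G3, of "-2"] ci i nK by simp
        next
          case False then show ?thesis using W[OF G2, of 0] Q0 ci i nK by simp
        qed
      next
        assume i: "i = 4" show ?thesis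
        proof (cases "r = 0")
          case True then show ?thesis using W[OF G2, of 1] ci i nK by simp
        next
          case False then show ?thesis using W[OF G3, of "-1"] Q2 ci i nK by simp
        qed
      next
        assume "i = 5" then show ?thesis using W[OF G3, of 0] RR ci nK by simp
      next
        assume i: "i = 6" show ?thesis
        proof (cases "r = 0")
          case True then show ?thesis using W[OF FZ, of "-2"] ci i nK by simp
        next
          case False then show ?thesis using W[OF G3, of 1] Q2 ci i nK by simp
        qed
      next
        assume i: "i = 7" show ?thesis
        proof (cases "r = 2")
          case True then show ?thesis using W[OF G3, of 2] ci i nK by simp
        next
          case False then show ?thesis using W[OF FZ, of "-1"] Q0 ci i nK by simp
        qed
      qed
    next
      assume s3: "s = 3"
      have "6 * k \<le> c" using False s3 by auto
      then obtain i where ci: "c = 6 * k + i" using le_Suc_ex by blast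
      have i3: "i < 3" using ci rc(3) nks s3 by simp
      have H0: "fc n (0, 6 * k) = 2" using FN s3 by simp
      have H1: "fc n (2, 6 * k + 1) = 1" using nks s3 by (intro fc1) (auto simp: isC2_def isC1_def nd)
      have "i = 0 \<or> i = 1 \<or> i = 2" using i3 by arith
      then show ?thesis
      proof (elim disjE)
        assume "i = 0" then show ?thesis using W[OF H0, of 0] RR ci nks s3 by simp
      next
        assume i: "i = 1" show ?thesis
        proof (cases "r = 2")
          case True then show ?thesis using W[OF H1, of 0] ci i nks s3 by simp
        next
          case False then show ?thesis using W[OF H0, of 1] Q0 ci i nks s3 by simp
        qed
      next
        assume i: "i = 2" show ?thesis
        proof (cases "r = 2")
          case True then show ?thesis using W[OF H1, of 1] ci i nks s3 by simp
        next
          case False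
          show ?thesis
          proof (cases "r = 0")
            case True then show ?thesis using W[OF H0, of 2] ci i nks s3 by simp
          next
            case False then show ?thesis using W[OF FZ, of "-1"] Q0 \<open>r \<noteq> 2\<close> ci i nks s3 by simp
          qed
        qed
      qed
    next
      assume s4: "s = 4"
      have "6 * k \<le> c" using False s4 by auto
      then obtain i where ci: "c = 6 * k + i" using le_Suc_ex by blast
      have i4: "i < 4" using ci rc(3) nks s4 by simp
      have H0: "fc n (0, 6 * k) = 2" using FN s4 by simp
      have H1: "fc n (2, 6 * k + 2) = 1" using nks s4 by (intro fc1) (auto simp: isC2_def isC1_def nd)
      have "i = 0 \<or> i = 1 \<or> i = 2 \<or> i = 3" using i4 by arith
      then show ?thesis
      proof (elim disjE)
        assume "i = 0" then show ?thesis using W[OF H0, of 0] RR ci nks s4 by simp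
      next
        assume i: "i = 1" show ?thesis
        proof (cases "r = 2")
          case True then show ?thesis using W[OF H1, of "-1"] ci i nks s4 by simp
        next
          case False then show ?thesis using W[OF H0, of 1] Q0 ci i nks s4 by simp
        qed
      next
        assume i: "i = 2" show ?thesis
        proof (cases "r = 0")
          case True then show ?thesis using W[OF H0, of 2] ci i nks s4 by simp
        next
          case False then show ?thesis using W[OF H1, of 0] Q2 ci i nks s4 by simp
        qed
      next
        assume i: "i = 3" show ?thesis
        proof (cases "r = 2")
          case True then show ?thesis using W[OF H1, of 1] ci i nks s4 by simp
        next
          case False then show ?thesis using W[OF FZ, of "-1"] Q0 ci i nks s4 by simp
        qed
      qed
    next
      assume s5: "s = 5"
      have "6 * k \<le> c" using False s5 by auto
      then obtain i where ci: "c = 6 * k + i" using le_Suc_ex by blast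
      have i5: "i < 5" using ci rc(3) nks s5 by simp
      have H0: "fc n (0, 6 * k) = 2" using FN s5 by simp
      have H1: "fc n (2, 6 * k + 2) = 2" using nks s5 by (intro fc2) (auto simp: isC2_def nd)
      have "i = 0 \<or> i = 1 \<or> i = 2 \<or> i = 3 \<or> i = 4" using i5 by arith
      then show ?thesis
      proof (elim disjE)
        assume "i = 0" then show ?thesis using W[OF H0, of 0] RR ci nks s5 by simp
      next
        assume i: "i = 1" show ?thesis
        proof (cases "r = 2")
          case True then show ?thesis using W[OF H1, of "-1"] ci i nks s5 by simp
        next
          case False then show ?thesis using W[OF H0, of 1] Q0 ci i nks s5 by simp
        qed
      next
        assume "i = 2" then show ?thesis using W[OF H1, of 0] RR ci nks s5 by simp
      next
        assume i: "i = 3" show ?thesis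
        proof (cases "r = 0")
          case True then show ?thesis using W[OF FZ, of "-2"] ci i nks s5 by simp
        next
          case False then show ?thesis using W[OF H1, of 1] Q2 ci i nks s5 by simp
        qed
      next
        assume i: "i = 4" show ?thesis
        proof (cases "r = 2")
          case True then show ?thesis using W[OF H1, of 2] ci i nks s5 by simp
        next
          case False then show ?thesis using W[OF FZ, of "-1"] Q0 ci i nks s5 by simp
        qed
      qed
    qed
  qed
  then show ?thesis using rc by simp
qed



lemma ind_sum_le: "finite S \<Longrightarrow> (\<Sum>v\<in>TV n. if v \<in> S then 1 else 0) \<le> card (S::(nat\<times>nat) set)"
proof -
  assume fS: "finite S"
  have "(\<Sum>v\<in>TV n. if v \<in> S then 1 else 0) = card {v \<in> TV n. v \<in> S}" by (simp add: card_filter_sum)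
  also have "\<dots> \<le> card S" using fS by (intro card_mono) auto
  finally show ?thesis .
qed

lemma fc_cost: assumes n4: "n \<ge> 4" shows "bcast_cost (TV n) (fc n) \<le> gval n"
proof -
  define k where "k = n div 6"
  define s where "s = n mod 6"
  have nks: "n = 6 * k + s" "s < 6" by (simp_all add: k_def s_def)
  have nd: "n div 6 = k" "n mod 6 = s" by (simp_all add: k_def s_def)
  define K3 where "K3 = (if s = 2 then k - 1 else k)"
  define A where "A = (\<lambda>q. (0::nat, 6 * q)) ` {..<k}"
  define B where "B = (\<lambda>q. (2::nat, 6 * q + 3)) ` {..<K3}"
  define X2 where "X2 = (if s = 0 then {} else if s = 2 then {(2::nat, 6 * k - 1)}
                         else if s = 5 then {(0, 6 * k), (2, 6 * k + 2)} else {(0, 6 * k)})"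
  define X1 where "X1 = (if s = 2 then {(2::nat, 6 * k - 4), (0, 6 * k - 3)} else if s = 3 then {(2, 6 * k + 1)}
                         else if s = 4 then {(2, 6 * k + 2)} else {})"
  let ?I = "\<lambda>S v. if v \<in> S then 1 else (0::nat)"
  have pt: "fc n v \<le> 2 * ?I A v + 2 * ?I B v + 2 * ?I X2 v + ?I X1 v" for v
  proof (cases v)
    case (Pair r c)
    show ?thesis
    proof (cases "r < 4 \<and> c < n \<and> isC2 n r c")
      case True
      then have C: "isC2 n r c" by simp
      have "(r,c) \<in> A \<or> (r,c) \<in> B \<or> (r,c) \<in> X2"
      proof -
        consider (a) "r = 0 \<and> c mod 6 = 0 \<and> c < 6 * k" | (b) "r = 2 \<and> c mod 6 = 3 \<and> c < 6 * K3"
          | (x) "(r = 0 \<and> c = 6 * k \<and> s \<noteq> 0 \<and> s \<noteq> 2) \<or> (r = 2 \<and> c = 6 * k - 1 \<and> s = 2)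
                 \<or> (r = 2 \<and> c = 6 * k + 2 \<and> s = 5)"
          using C unfolding isC2_def nd K3_def by blast
        then show ?thesis
        proof cases
          case a
          then have "c = 6 * (c div 6)" "c div 6 < k" by auto
          then have "(r,c) \<in> A" using a unfolding A_def by (metis image_eqI lessThan_iff)
          then show ?thesis by simp
        next
          case b
          have e: "c = 6 * (c div 6) + c mod 6" by simp
          then have "c = 6 * (c div 6) + 3" "c div 6 < K3" using b by (simp, linarith)
          then have "(r,c) \<in> B" using b unfolding B_def by (metis image_eqI lessThan_iff)
          then show ?thesis by simp
        next
          case x then show ?thesis unfolding X2_def by auto
        qed
      qed
      then show ?thesis using True Pair by (auto simp: fc_def)
    next
      case False
      show ?thesis
      proof (cases "r < 4 \<and> c < n \<and> isC1 n r c")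
        case True
        then have "(r,c) \<in> X1" unfolding isC1_def nd X1_def by auto
        then show ?thesis using False True Pair by (auto simp: fc_def)
      next
        case False2: False
        then show ?thesis using False Pair by (simp add: fc_def)
      qed
    qed
  qed
  have fin: "finite A" "finite B" "finite X2" "finite X1" by (simp_all add: A_def B_def X2_def X1_def)
  have "bcast_cost (TV n) (fc n) \<le> (\<Sum>v\<in>TV n. 2 * ?I A v + 2 * ?I B v + 2 * ?I X2 v + ?I X1 v)"
    unfolding bcast_cost_def by (rule sum_mono) (rule pt)
  also have "\<dots> = 2 * (\<Sum>v\<in>TV n. ?I A v) + 2 * (\<Sum>v\<in>TV n. ?I B v) + 2 * (\<Sum>v\<in>TV n. ?I X2 v) + (\<Sum>v\<in>TV n. ?I X1 v)"
    by (simp add: sum.distrib sum_distrib_left)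
  also have "\<dots> \<le> 2 * card A + 2 * card B + 2 * card X2 + card X1"
    using ind_sum_le[OF fin(1), of n] ind_sum_le[OF fin(2), of n] ind_sum_le[OF fin(3), of n] ind_sum_le[OF fin(4), of n]
    by linarith
  also have "\<dots> \<le> gval n"
  proof -
    have cA: "card A \<le> k" unfolding A_def using card_image_le[of "{..<k}"] by simp
    have cB: "card B \<le> K3" unfolding B_def using card_image_le[of "{..<K3}"] by simp
    have c2: "card X2 \<le> (if s = 0 then 0 else if s = 5 then 2 else 1)" unfolding X2_def
      by (auto simp: card_insert_le)
    have c1: "card X1 \<le> (if s = 2 then 2 else if s = 3 \<or> s = 4 then 1 else 0)" unfolding X1_def
      by (auto simp: card_insert_le)
    have k1: "s = 2 \<Longrightarrow> k \<ge> 1" using nks n4 by auto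
    have gv: "gval n = 4 * k + (if s = 0 then 0 else if s = 1 \<or> s = 2 then 2 else if s = 3 \<or> s = 4 then 3 else 4)"
      unfolding gval_def nd by simp
    have "s = 0 \<or> s = 1 \<or> s = 2 \<or> s = 3 \<or> s = 4 \<or> s = 5" using nks by arith
    then show ?thesis using cA cB c2 c1 k1 gv unfolding K3_def by (elim disjE) auto
  qed
  finally show ?thesis .
qed

lemma fc_dominating: assumes n4: "n \<ge> 4" shows "dominating_bcast2 (TV n) (TE n) (fc n)"
proof -
  have n: "n > 0" using n4 by simp
  have "broadcast2 (TV n) (fc n)" unfolding broadcast2_def by (auto simp: fc_def inV)
  moreover have "\<forall>u\<in>TV n. \<exists>v\<in>TV n. hears (TV n) (TE n) (fc n) u v"
  proof
    fix u assume u: "u \<in> TV n"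
    obtain w where "cov n (fc n) w u" using fc_dom[OF n4 u] by blast
    then show "\<exists>v\<in>TV n. hears (TV n) (TE n) (fc n) u v" using u unfolding cov_def hears_iff[OF n] by blast
  qed
  ultimately show ?thesis unfolding dominating_bcast2_def by blast
qed

theorem theorem4p3:
  fixes n :: nat
  assumes "n \<ge> 4"
  shows "gamma_b2 (torus_V 4 n) (torus_E 4 n) =
           4 * (n div 6) +
           (if n mod 6 = 0 then 0
            else if n mod 6 = 1 \<or> n mod 6 = 2 then 2
            else if n mod 6 = 3 \<or> n mod 6 = 4 then 3
            else 4)"
proof -
  have "gamma_b2 (TV n) (TE n) = gval n"
    unfolding gamma_b2_def
  proof (rule Least_equality)
    have "bcast_cost (TV n) (fc n) = gval n"
      using fc_cost[OF assms] lower[OF assms fc_dominating[OF assms]] by simp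
    then show "\<exists>f. dominating_bcast2 (TV n) (TE n) f \<and> bcast_cost (TV n) f = gval n"
      using fc_dominating[OF assms] by blast
  next
    fix c assume "\<exists>f. dominating_bcast2 (TV n) (TE n) f \<and> bcast_cost (TV n) f = c"
    then show "gval n \<le> c" using lower[OF assms] by blast
  qed
  then show ?thesis unfolding gval_def by simp
qed

end
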